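(* Fix $\theta\in(1/2,7/8]$, an interval $[\underline h,\bar h]\subset(0,1)$, $h_1\in[0,1]$, $\alpha\in[0,1]$. Assume that for every realization of the disorder and every $h_0\in[\underline h,\bar h]$, $\langle\sigma_i\sigma_j\rangle_{h_0,h_1,\alpha}-\langle\sigma_i\rangle_{h_0,h_1,\alpha}\langle\sigma_j\rangle_{h_0,h_1,\alpha}\ge 0$ for all $i,j$. Assume the couplings satisfy the condition that $(J_X)$ are independent with finite second moments and $\sum_{X\subset\{1,\dots,n\}}\mathrm{Var}(J_X)\le Cn$ for a constant $C$ independent of $n$, and let $C_P>0$ be a constant independent of $n,h_0,h_1,\alpha$ such that $\mathbb E[(P_n(h_0,h_1,\alpha)-p_n(h_0,h_1,\alpha))^2]\le C_P/n$ for all $h_0,h_1,\alpha\in[0,1]$. Then for all sufficiently large $n$, $$\int_{\underline h}^{\bar h}dh_0\,\mathbb E\big\langle\big(Q_1-\mathbb E\langle Q_1\rangle_{h_0,h_1,\alpha}\big)^2\big\rangle_{h_0,h_1,\alpha}\le\frac{5C_P+42}{n^{1/3}}.$$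
   Context: Spins $\boldsymbol\sigma\in\{-1,1\}^n$, $\sigma_X=\prod_{i\in X}\sigma_i$. The couplings $J_X\ge 0$, $X\subset\{1,\dots,n\}$, are independent random variables; $\tau_1,\dots,\tau_n$ are i.i.d. Poisson with mean $\alpha n^{\theta-1}$, independent of the couplings. Hamiltonian $\mathcal H(\boldsymbol\sigma)=-\sum_XJ_X\sigma_X-h_0\sum_i\sigma_i-h_1\sum_i\tau_i\sigma_i$, partition function $\mathcal Z_{h_0,h_1,\alpha}=\sum_{\boldsymbol\sigma}e^{-\mathcal H}$, Gibbs expectation $\langle\cdot\rangle_{h_0,h_1,\alpha}$ (for several replicas, the product Gibbs measure of independent copies). Pressure $P_n(h_0,h_1,\alpha)=\frac1n\ln\mathcal Z_{h_0,h_1,\alpha}$, $p_n=\mathbb EP_n$, where $\mathbb E$ is expectation over all couplings $J_X$ and over $\boldsymbol\tau$. Overlap $Q_1=\frac1n\sum_i\sigma_i$. *)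

theory Defs
  imports "HOL-Probability.Probability"
begin

definition spins :: "nat \<Rightarrow> (nat \<Rightarrow> real) set" where
  "spins n = PiE {1..n} (\<lambda>_. {-1, 1})"

definition hamiltonian ::
  "nat \<Rightarrow> (nat set \<Rightarrow> real) \<Rightarrow> (nat \<Rightarrow> nat) \<Rightarrow> real \<Rightarrow> real \<Rightarrow> (nat \<Rightarrow> real) \<Rightarrow> real" where
  "hamiltonian n J tau h0 h1 \<sigma> =
     - (\<Sum>X\<in>Pow {1..n}. J X * (\<Prod>i\<in>X. \<sigma> i))
     - h0 * (\<Sum>i\<in>{1..n}. \<sigma> i)
     - h1 * (\<Sum>i\<in>{1..n}. real (tau i) * \<sigma> i)"

definition partition_fn ::
  "nat \<Rightarrow> (nat set \<Rightarrow> real) \<Rightarrow> (nat \<Rightarrow> nat) \<Rightarrow> real \<Rightarrow> real \<Rightarrow> real" where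
  "partition_fn n J tau h0 h1 = (\<Sum>\<sigma>\<in>spins n. exp (- hamiltonian n J tau h0 h1 \<sigma>))"

definition gibbs ::
  "nat \<Rightarrow> (nat set \<Rightarrow> real) \<Rightarrow> (nat \<Rightarrow> nat) \<Rightarrow> real \<Rightarrow> real \<Rightarrow> ((nat \<Rightarrow> real) \<Rightarrow> real) \<Rightarrow> real" where
  "gibbs n J tau h0 h1 f =
     (\<Sum>\<sigma>\<in>spins n. f \<sigma> * exp (- hamiltonian n J tau h0 h1 \<sigma>)) / partition_fn n J tau h0 h1"

definition pressure ::
  "nat \<Rightarrow> (nat set \<Rightarrow> real) \<Rightarrow> (nat \<Rightarrow> nat) \<Rightarrow> real \<Rightarrow> real \<Rightarrow> real" where
  "pressure n J tau h0 h1 = ln (partition_fn n J tau h0 h1) / real n"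

definition overlap :: "nat \<Rightarrow> (nat \<Rightarrow> real) \<Rightarrow> real" where
  "overlap n \<sigma> = (\<Sum>i\<in>{1..n}. \<sigma> i) / real n"

text \<open>Poisson distribution with mean r \<ge> 0 (r = 0 allowed: point mass at 0).\<close>
definition poisson_measure :: "real \<Rightarrow> nat measure" where
  "poisson_measure r = density (count_space UNIV) (\<lambda>k. ennreal (r ^ k / fact k * exp (- r)))"

definition disorder ::
  "(nat \<Rightarrow> nat set \<Rightarrow> real measure) \<Rightarrow> real \<Rightarrow> nat \<Rightarrow> real \<Rightarrow> ((nat set \<Rightarrow> real) \<times> (nat \<Rightarrow> nat)) measure" where
  "disorder \<mu> \<theta> n \<alpha> =
     (\<Pi>\<^sub>M X\<in>Pow {1..n}. \<mu> n X) \<Otimes>\<^sub>M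
     (\<Pi>\<^sub>M i\<in>{1..n}. poisson_measure (\<alpha> * real n powr (\<theta> - 1)))"

end

theory Submission
  imports Defs
begin


lemma poisson_space[simp]: "space (poisson_measure r) = UNIV"
  by (simp add: poisson_measure_def)

lemma poisson_sets[simp]: "sets (poisson_measure r) = sets (count_space UNIV)"
  by (simp add: poisson_measure_def)

lemma exp_sums_real: "(\<lambda>k. r ^ k / fact k) sums exp (r::real)"
proof -
  have "(\<lambda>k. r ^ k / fact k) = (\<lambda>k. r ^ k /\<^sub>R fact k)"
    by (rule ext) (simp add: divide_inverse_commute)
  then show ?thesis using exp_converges[of r] by simp
qed

lemma poisson_prob:
  assumes r: "0 \<le> r" shows "prob_space (poisson_measure r)"
proof (rule prob_spaceI)
  have s1: "(\<lambda>k. r ^ k / fact k * exp (- r)) sums (exp r * exp (-r))"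
    by (rule sums_mult2[OF exp_sums_real])
  have sm: "summable (\<lambda>k. r ^ k / fact k * exp (- r))"
    using s1 by (rule sums_summable)
  have "emeasure (poisson_measure r) (space (poisson_measure r))
      = (\<integral>\<^sup>+ k. ennreal (r ^ k / fact k * exp (- r)) \<partial>count_space UNIV)"
    unfolding poisson_measure_def by (subst emeasure_density) auto
  also have "\<dots> = (\<Sum>k. ennreal (r ^ k / fact k * exp (- r)))"
    by (rule nn_integral_count_space_nat)
  also have "\<dots> = ennreal (\<Sum>k. r ^ k / fact k * exp (- r))"
    by (rule suminf_ennreal2) (use r sm in auto)
  also have "(\<Sum>k. r ^ k / fact k * exp (- r)) = 1" using s1 by (simp add: sums_iff exp_minus_inverse)
  finally show "emeasure (poisson_measure r) (space (poisson_measure r)) = 1" by simp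
qed
lemma poisson_sq_int:
  assumes r: "0 \<le> r" shows "integrable (poisson_measure r) (\<lambda>k. (real k)\<^sup>2)"
proof -
  have "integrable (count_space UNIV) (\<lambda>k. (r ^ k / fact k * exp (- r)) *\<^sub>R (real k)\<^sup>2)"
    unfolding integrable_count_space_nat_iff
  proof (rule summable_comparison_test)
    show "summable (\<lambda>k. (4*r) ^ k / fact k)"
      using exp_sums_real[of "4*r"] by (rule sums_summable)
    have "norm ((r ^ k / fact k * exp (- r)) *\<^sub>R (real k)\<^sup>2) \<le> (4*r) ^ k / fact k" for k
    proof -
      have k: "real k < 2 ^ k" using less_exp[of k] by (metis of_nat_less_iff of_nat_numeral of_nat_power)
      have "(real k)\<^sup>2 \<le> (2^k)\<^sup>2" using k by (intro power_mono) auto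
      also have "(2^k)\<^sup>2 = (2::real)^k * 2^k" by (simp add: power2_eq_square)
      also have "(2::real)^k * 2^k = (2*2)^k" by (simp only: power_mult_distrib)
      finally have k2: "(real k)\<^sup>2 \<le> 4 ^ k" by simp
      have e: "exp (-r) \<le> 1" using r by simp
      have "norm ((r ^ k / fact k * exp (- r)) *\<^sub>R (real k)\<^sup>2) = r ^ k / fact k * exp (- r) * (real k)\<^sup>2"
        using r by simp
      also have "\<dots> \<le> r ^ k / fact k * 1 * 4 ^ k"
        by (intro mult_mono e k2) (use r in auto)
      also have "\<dots> = (4*r) ^ k / fact k" by (simp add: power_mult_distrib)
      finally show ?thesis .
    qed
    then show "\<exists>N. \<forall>n\<ge>N. norm (norm ((r ^ n / fact n * exp (- r)) *\<^sub>R (real n)\<^sup>2)) \<le> (4*r) ^ n / fact n" by simp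
  qed
  then show ?thesis unfolding poisson_measure_def
    by (subst integrable_density) (use r in auto)
qed


lemma int_fst_comp:
  fixes f :: "'a \<Rightarrow> real"
  assumes "prob_space A" "prob_space B" "f \<in> borel_measurable A" "integrable A f"
  shows "integrable (A \<Otimes>\<^sub>M B) (\<lambda>d. f (fst d))"
proof -
  have "distr (A \<Otimes>\<^sub>M B) A fst = A" using prob_space.distr_pair_fst[OF assms(2)] .
  then show ?thesis using integrable_distr_eq[of fst "A \<Otimes>\<^sub>M B" A f] assms by simp
qed

lemma int_snd_comp:
  fixes f :: "'a \<Rightarrow> real"
  assumes "prob_space A" "prob_space B" "f \<in> borel_measurable B" "integrable B f"
  shows "integrable (A \<Otimes>\<^sub>M B) (\<lambda>d. f (snd d))"
proof -
  interpret A: prob_space A by fact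
  interpret B: prob_space B by fact
  interpret pair_sigma_finite A B ..
  have "integrable (B \<Otimes>\<^sub>M A) (\<lambda>d. f (fst d))" using int_fst_comp[OF assms(2,1,3,4)] .
  then have "integrable (B \<Otimes>\<^sub>M A) (\<lambda>(x,y). (\<lambda>d. f (snd d)) (y,x))"
    by (simp add: case_prod_beta')
  then show ?thesis using integrable_product_swap_iff by blast
qed

lemma int_comp_PiM:
  fixes f :: "'a \<Rightarrow> real"
  assumes "\<And>i. i \<in> I \<Longrightarrow> prob_space (M i)" "i \<in> I" "f \<in> borel_measurable (M i)" "integrable (M i) f"
  shows "integrable (PiM I M) (\<lambda>\<omega>. f (\<omega> i))"
proof -
  have "distr (PiM I M) (M i) (\<lambda>\<omega>. \<omega> i) = M i" using distr_PiM_component[of I M i] assms(1,2) by blast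
  then show ?thesis using integrable_distr_eq[of "\<lambda>\<omega>. \<omega> i" "PiM I M" "M i" f] assms
    by (simp add: measurable_component_singleton)
qed

context
  fixes \<mu> :: "nat \<Rightarrow> nat set \<Rightarrow> real measure" and \<theta> \<alpha> :: real and n :: nat
  assumes mu_prob: "\<And>X. prob_space (\<mu> n X)" and mu_sets: "\<And>X. sets (\<mu> n X) = sets borel"
    and alpha0: "0 \<le> \<alpha>"
begin

lemma rate_nonneg: "0 \<le> \<alpha> * real n powr (\<theta> - 1)"
  using alpha0 by simp

lemma PA_prob: "prob_space (\<Pi>\<^sub>M X\<in>Pow {1..n}. \<mu> n X)"
  by (rule prob_space_PiM) (rule mu_prob)

lemma PB_prob: "prob_space (\<Pi>\<^sub>M i\<in>{1..n}. poisson_measure (\<alpha> * real n powr (\<theta> - 1)))"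
  by (rule prob_space_PiM) (rule poisson_prob[OF rate_nonneg])

lemma DM_prob: "prob_space (disorder \<mu> \<theta> n \<alpha>)"
  unfolding disorder_def by (rule prob_space_pair[OF PA_prob PB_prob])

lemma meas_J: assumes "X \<in> Pow {1..n}" shows "(\<lambda>d. fst d X) \<in> borel_measurable (disorder \<mu> \<theta> n \<alpha>)"
proof -
  have "(\<lambda>d. fst d X) \<in> measurable (disorder \<mu> \<theta> n \<alpha>) (\<mu> n X)"
    unfolding disorder_def
    by (rule measurable_compose[OF measurable_fst measurable_component_singleton[OF assms]])
  then show ?thesis using mu_sets measurable_cong_sets by blast
qed

lemma meas_tau: assumes "i \<in> {1..n}" shows "(\<lambda>d. real (snd d i)) \<in> borel_measurable (disorder \<mu> \<theta> n \<alpha>)"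
proof -
  have "(\<lambda>d. snd d i) \<in> measurable (disorder \<mu> \<theta> n \<alpha>) (poisson_measure (\<alpha> * real n powr (\<theta> - 1)))"
    unfolding disorder_def
    by (rule measurable_compose[OF measurable_snd measurable_component_singleton[OF assms]])
  then have "(\<lambda>d. snd d i) \<in> measurable (disorder \<mu> \<theta> n \<alpha>) (count_space UNIV)"
    using measurable_cong_sets poisson_sets by blast
  then show ?thesis by simp
qed

lemma int_J2: assumes "X \<in> Pow {1..n}" "integrable (\<mu> n X) (\<lambda>x. x\<^sup>2)"
  shows "integrable (disorder \<mu> \<theta> n \<alpha>) (\<lambda>d. (fst d X)\<^sup>2)"
proof -
  have m0: "(\<lambda>x::real. x\<^sup>2) \<in> borel_measurable borel" by simp
  have m: "(\<lambda>x::real. x\<^sup>2) \<in> borel_measurable (\<mu> n X)"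
    by (subst measurable_cong_sets[OF mu_sets refl]) (rule m0)
  have mc: "(\<lambda>\<omega>. \<omega> X) \<in> measurable (\<Pi>\<^sub>M X\<in>Pow {1..n}. \<mu> n X) (\<mu> n X)"
    by (rule measurable_component_singleton[OF assms(1)])
  have m2: "(\<lambda>\<omega>. (\<omega> X)\<^sup>2) \<in> borel_measurable (\<Pi>\<^sub>M X\<in>Pow {1..n}. \<mu> n X)"
    using measurable_compose[OF mc m] by simp
  have "integrable (\<Pi>\<^sub>M X\<in>Pow {1..n}. \<mu> n X) (\<lambda>\<omega>. (\<omega> X)\<^sup>2)"
    by (rule int_comp_PiM[where f="\<lambda>x. x\<^sup>2" and I="Pow {1..n}" and M="\<mu> n" and i=X, OF mu_prob assms(1) m assms(2)])
  then show ?thesis unfolding disorder_def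
    using int_fst_comp[where f="\<lambda>\<omega>. (\<omega> X)\<^sup>2", OF PA_prob PB_prob m2] by simp
qed

lemma int_tau2: assumes "i \<in> {1..n}"
  shows "integrable (disorder \<mu> \<theta> n \<alpha>) (\<lambda>d. (real (snd d i))\<^sup>2)"
proof -
  let ?P = "poisson_measure (\<alpha> * real n powr (\<theta> - 1))"
  have m: "(\<lambda>k. (real k)\<^sup>2) \<in> borel_measurable ?P"
    by (subst measurable_cong_sets[OF poisson_sets refl]) simp
  have mc: "(\<lambda>\<omega>. \<omega> i) \<in> measurable (\<Pi>\<^sub>M i\<in>{1..n}. ?P) ?P"
    by (rule measurable_component_singleton[OF assms(1)])
  have m2: "(\<lambda>\<omega>. (real (\<omega> i))\<^sup>2) \<in> borel_measurable (\<Pi>\<^sub>M i\<in>{1..n}. ?P)"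
    using measurable_compose[OF mc m] by simp
  have "integrable (\<Pi>\<^sub>M i\<in>{1..n}. ?P) (\<lambda>\<omega>. (real (\<omega> i))\<^sup>2)"
    by (rule int_comp_PiM[where f="\<lambda>k. (real k)\<^sup>2", OF poisson_prob[OF rate_nonneg] assms(1) m
          poisson_sq_int[OF rate_nonneg]])
  then show ?thesis unfolding disorder_def
    using int_snd_comp[where f="\<lambda>\<omega>. (real (\<omega> i))\<^sup>2", OF PA_prob PB_prob m2] by simp
qed

end


definition avg :: "'a set \<Rightarrow> ('a \<Rightarrow> real) \<Rightarrow> ('a \<Rightarrow> real) \<Rightarrow> real" where
  "avg A w f = (\<Sum>x\<in>A. f x * w x) / (\<Sum>x\<in>A. w x)"

locale wavg =
  fixes A :: "'a set" and w :: "'a \<Rightarrow> real"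
  assumes fin: "finite A" and ne: "A \<noteq> {}" and pos: "\<And>x. x \<in> A \<Longrightarrow> 0 < w x"
begin

lemma W_pos: "0 < (\<Sum>x\<in>A. w x)"
  using fin ne pos by (simp add: sum_pos)

lemma avg_add: "avg A w (\<lambda>x. f x + g x) = avg A w f + avg A w g"
  unfolding avg_def by (simp add: distrib_right sum.distrib add_divide_distrib)

lemma avg_diff: "avg A w (\<lambda>x. f x - g x) = avg A w f - avg A w g"
  unfolding avg_def by (simp add: left_diff_distrib sum_subtractf diff_divide_distrib)

lemma avg_cmult: "avg A w (\<lambda>x. c * f x) = c * avg A w f"
  unfolding avg_def by (simp add: sum_distrib_left mult.assoc)

lemma avg_const: "avg A w (\<lambda>x. c) = c"
  unfolding avg_def using W_pos by (simp add: sum_distrib_left[symmetric])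

lemma avg_mono: "(\<And>x. x \<in> A \<Longrightarrow> f x \<le> g x) \<Longrightarrow> avg A w f \<le> avg A w g"
  unfolding avg_def using W_pos pos
  by (intro divide_right_mono sum_mono mult_right_mono) (auto intro: less_imp_le)

lemma avg_cong: "(\<And>x. x \<in> A \<Longrightarrow> f x = g x) \<Longrightarrow> avg A w f = avg A w g"
  unfolding avg_def by (simp cong: sum.cong)

lemma avg_abs_le: assumes "\<And>x. x \<in> A \<Longrightarrow> \<bar>f x\<bar> \<le> c" shows "\<bar>avg A w f\<bar> \<le> c"
proof -
  have "avg A w f \<le> avg A w (\<lambda>x. c)" using assms by (intro avg_mono) (auto simp: abs_le_iff)
  moreover have "avg A w (\<lambda>x. - c) \<le> avg A w f"
  proof (rule avg_mono)
    fix x assume "x \<in> A" then have "\<bar>f x\<bar> \<le> c" by (rule assms)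
    then show "- c \<le> f x" by linarith
  qed
  ultimately show ?thesis by (simp add: avg_const)
qed

lemma avg_exp_ge: "exp (avg A w g) \<le> avg A w (\<lambda>x. exp (g x))"
proof -
  let ?c = "avg A w g"
  have "avg A w (\<lambda>x. exp ?c * (1 + (g x - ?c))) \<le> avg A w (\<lambda>x. exp (g x))"
  proof (rule avg_mono)
    fix x assume "x \<in> A"
    have "exp ?c * (1 + (g x - ?c)) \<le> exp ?c * exp (g x - ?c)"
      by (intro mult_left_mono) auto
    also have "\<dots> = exp (g x)" by (simp add: exp_diff)
    finally show "exp ?c * (1 + (g x - ?c)) \<le> exp (g x)" .
  qed
  moreover have "avg A w (\<lambda>x. exp ?c * (1 + (g x - ?c))) = exp ?c"
    by (simp add: avg_cmult avg_add avg_diff avg_const)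
  ultimately show ?thesis by simp
qed

lemma ln_sum_eq: "ln (\<Sum>x\<in>A. w x * exp (g x)) = ln (\<Sum>x\<in>A. w x) + ln (avg A w (\<lambda>x. exp (g x)))"
proof -
  have a: "0 < avg A w (\<lambda>x. exp (g x))"
    using avg_exp_ge[of g] exp_gt_zero[of "avg A w g"] by linarith
  have "(\<Sum>x\<in>A. w x * exp (g x)) = (\<Sum>x\<in>A. w x) * avg A w (\<lambda>x. exp (g x))"
    unfolding avg_def using W_pos by (simp add: mult.commute)
  then show ?thesis using W_pos a by (simp add: ln_mult)
qed

lemma tangent: "avg A w g \<le> ln (\<Sum>x\<in>A. w x * exp (g x)) - ln (\<Sum>x\<in>A. w x)"
proof -
  have a: "0 < avg A w (\<lambda>x. exp (g x))"
    using avg_exp_ge[of g] exp_gt_zero[of "avg A w g"] by linarith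
  have "avg A w g = ln (exp (avg A w g))" by simp
  also have "\<dots> \<le> ln (avg A w (\<lambda>x. exp (g x)))"
    using avg_exp_ge[of g] a by (subst ln_le_cancel_iff) auto
  finally show ?thesis by (simp add: ln_sum_eq)
qed

lemma cosh_bound: "2 + (y::real)\<^sup>2 / 2 \<le> exp y + exp (- y)"
proof (cases "0 \<le> y")
  case True
  have "1 + y + y\<^sup>2 / 2 \<le> exp y" using exp_lower_Taylor_quadratic[OF True] .
  moreover have "1 + (- y) \<le> exp (- y)" by (rule exp_ge_add_one_self)
  ultimately show ?thesis by linarith
next
  case False
  then have "0 \<le> - y" by simp
  have "1 + (-y) + (-y)\<^sup>2 / 2 \<le> exp (-y)" using exp_lower_Taylor_quadratic[OF \<open>0 \<le> - y\<close>] .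
  moreover have "1 + y \<le> exp y" by (rule exp_ge_add_one_self)
  moreover have "(-y)\<^sup>2 = y\<^sup>2" by simp
  ultimately show ?thesis by linarith
qed

lemma second_diff:
  "ln (1 + t\<^sup>2 * (avg A w (\<lambda>x. (g x)\<^sup>2) - (avg A w g)\<^sup>2) / 2)
     \<le> ln (\<Sum>x\<in>A. w x * exp (t * g x)) + ln (\<Sum>x\<in>A. w x * exp (- t * g x)) - 2 * ln (\<Sum>x\<in>A. w x)"
proof -
  define c where "c = avg A w g"
  define a' where "a' = avg A w (\<lambda>x. exp (t * (g x - c)))"
  define b' where "b' = avg A w (\<lambda>x. exp (- t * (g x - c)))"
  have avgX: "avg A w (\<lambda>x. g x - c) = 0" by (simp add: avg_diff avg_const c_def)
  have a1: "1 \<le> a'"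
  proof -
    have "exp (avg A w (\<lambda>x. t * (g x - c))) \<le> a'" unfolding a'_def by (rule avg_exp_ge)
    then show ?thesis by (simp add: avg_cmult avgX)
  qed
  have b1: "1 \<le> b'"
  proof -
    have "exp (avg A w (\<lambda>x. - t * (g x - c))) \<le> b'" unfolding b'_def by (rule avg_exp_ge)
    moreover have "avg A w (\<lambda>x. - t * (g x - c)) = 0"
      using avg_cmult[of "-t" "\<lambda>x. g x - c"] avgX by simp
    ultimately show ?thesis by simp
  qed
  have V: "avg A w (\<lambda>x. (g x - c)\<^sup>2) = avg A w (\<lambda>x. (g x)\<^sup>2) - c\<^sup>2"
  proof -
    have "avg A w (\<lambda>x. (g x - c)\<^sup>2) = avg A w (\<lambda>x. (g x)\<^sup>2 - (2 * c) * g x + c\<^sup>2)"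
      by (rule avg_cong) (simp add: power2_eq_square algebra_simps)
    also have "\<dots> = avg A w (\<lambda>x. (g x)\<^sup>2) - 2 * c * c + c\<^sup>2"
      by (simp add: avg_add avg_diff avg_cmult avg_const c_def)
    finally show ?thesis by (simp add: power2_eq_square)
  qed
  have ab: "2 + t\<^sup>2 * (avg A w (\<lambda>x. (g x)\<^sup>2) - c\<^sup>2) / 2 \<le> a' + b'"
  proof -
    have "avg A w (\<lambda>x. 2 + (t\<^sup>2 / 2) * (g x - c)\<^sup>2) \<le> avg A w (\<lambda>x. exp (t * (g x - c)) + exp (- (t * (g x - c))))"
      using cosh_bound[of "t * (g _ - c)"] by (intro avg_mono) (simp add: power_mult_distrib)
    moreover have "avg A w (\<lambda>x. 2 + (t\<^sup>2 / 2) * (g x - c)\<^sup>2) = 2 + (t\<^sup>2 / 2) * avg A w (\<lambda>x. (g x - c)\<^sup>2)"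
      by (simp only: avg_add avg_cmult avg_const)
    moreover have "avg A w (\<lambda>x. exp (t * (g x - c)) + exp (- (t * (g x - c)))) = a' + b'"
      unfolding a'_def b'_def by (simp add: avg_add)
    ultimately show ?thesis using V by simp

  qed
  have "0 \<le> (a' - 1) * (b' - 1)" using a1 b1 by simp
  then have prod: "a' * b' \<ge> a' + b' - 1" by (simp add: algebra_simps)
  let ?W = "\<Sum>x\<in>A. w x"
  have eg: "?W * exp (s * c) * avg A w (\<lambda>x. exp (s * (g x - c))) = (\<Sum>x\<in>A. w x * exp (s * g x))" for s
  proof -
    have "?W * exp (s * c) * avg A w (\<lambda>x. exp (s * (g x - c))) = exp (s * c) * (\<Sum>x\<in>A. exp (s * (g x - c)) * w x)"
      unfolding avg_def using W_pos by simp
    also have "\<dots> = (\<Sum>x\<in>A. exp (s * c) * (exp (s * (g x - c)) * w x))" by (simp add: sum_distrib_left)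
    also have "\<dots> = (\<Sum>x\<in>A. w x * exp (s * g x))"
    proof (rule sum.cong)
      fix x
      have "exp (s * c) * exp (s * (g x - c)) = exp (s * g x)" by (simp add: mult_exp_exp algebra_simps)
      then show "exp (s * c) * (exp (s * (g x - c)) * w x) = w x * exp (s * g x)" by (simp add: algebra_simps)
    qed simp
    finally show ?thesis .
  qed
  have ea: "(\<Sum>x\<in>A. w x * exp (t * g x)) = ?W * exp (t * c) * a'"
    unfolding a'_def using eg[of t] by simp
  have eb: "(\<Sum>x\<in>A. w x * exp (- t * g x)) = ?W * exp (- t * c) * b'"
    unfolding b'_def using eg[of "-t"] by simp
  have p1: "0 < a' * b'" using a1 b1 by simp
  have p2: "1 + t\<^sup>2 * (avg A w (\<lambda>x. (g x)\<^sup>2) - c\<^sup>2) / 2 \<le> a' * b'" using ab prod by linarith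
  have "0 \<le> avg A w (\<lambda>x. (g x - c)\<^sup>2)"
    using avg_mono[of "\<lambda>x. 0" "\<lambda>x. (g x - c)\<^sup>2"] by (simp add: avg_const)
  then have "0 \<le> t\<^sup>2 * (avg A w (\<lambda>x. (g x)\<^sup>2) - c\<^sup>2)" using V by simp
  then have p3: "0 < 1 + t\<^sup>2 * (avg A w (\<lambda>x. (g x)\<^sup>2) - c\<^sup>2) / 2" by linarith
  have "ln (1 + t\<^sup>2 * (avg A w (\<lambda>x. (g x)\<^sup>2) - c\<^sup>2) / 2) \<le> ln (a' * b')"
    using p1 p2 p3 by simp
  also have "\<dots> = ln (\<Sum>x\<in>A. w x * exp (t * g x)) + ln (\<Sum>x\<in>A. w x * exp (- t * g x)) - 2 * ln ?W"
    unfolding ea eb using W_pos a1 b1 by (simp add: ln_mult)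
  finally show ?thesis unfolding c_def .
qed

end


definition sqi :: "'a measure \<Rightarrow> ('a \<Rightarrow> real) \<Rightarrow> bool" where
  "sqi M f \<longleftrightarrow> f \<in> borel_measurable M \<and> integrable M (\<lambda>x. (f x)\<^sup>2)"

lemma sq_add_le: "((a::real) + b)\<^sup>2 \<le> 2 * a\<^sup>2 + 2 * b\<^sup>2"
proof -
  have "(a+b)\<^sup>2 = 2*a\<^sup>2 + 2*b\<^sup>2 - (a-b)\<^sup>2" by (simp add: power2_eq_square algebra_simps)
  then show ?thesis using zero_le_power2[of "a-b"] by linarith
qed

lemma sqi_add: assumes "sqi M f" "sqi M g" shows "sqi M (\<lambda>x. f x + g x)"
proof -
  have mf: "f \<in> borel_measurable M" and mg: "g \<in> borel_measurable M"
    and i1: "integrable M (\<lambda>x. (f x)\<^sup>2)" and i2: "integrable M (\<lambda>x. (g x)\<^sup>2)"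
    using assms by (auto simp: sqi_def)
  have m: "(\<lambda>x. f x + g x) \<in> borel_measurable M" using mf mg by simp
  have "integrable M (\<lambda>x. 2 * (f x)\<^sup>2 + 2 * (g x)\<^sup>2)" using i1 i2 by simp
  moreover have "(\<lambda>x. (f x + g x)\<^sup>2) \<in> borel_measurable M" using m by simp
  ultimately have "integrable M (\<lambda>x. (f x + g x)\<^sup>2)"
    by (rule Bochner_Integration.integrable_bound) (auto intro!: AE_I2 simp: sq_add_le)
  then show ?thesis using m by (simp add: sqi_def)
qed

lemma sqi_const: "finite_measure M \<Longrightarrow> sqi M (\<lambda>x. c)"
  by (simp add: sqi_def finite_measure.integrable_const)

lemma sqi_zero: "sqi M (\<lambda>x. 0)"
  by (simp add: sqi_def)

lemma sqi_cmult: assumes "sqi M f" shows "sqi M (\<lambda>x. c * f x)"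
proof -
  have "integrable M (\<lambda>x. c\<^sup>2 * (f x)\<^sup>2)" using assms by (simp add: sqi_def)
  moreover have [measurable]: "f \<in> borel_measurable M" using assms by (simp add: sqi_def)
  moreover have "(\<lambda>x. c * f x) \<in> borel_measurable M" by measurable
  ultimately show ?thesis by (simp add: sqi_def power_mult_distrib)
qed

lemma sqi_abs: assumes "sqi M f" shows "sqi M (\<lambda>x. \<bar>f x\<bar>)"
proof -
  have [measurable]: "f \<in> borel_measurable M" using assms by (simp add: sqi_def)
  have "(\<lambda>x. \<bar>f x\<bar>) \<in> borel_measurable M" by measurable
  then show ?thesis using assms by (simp add: sqi_def)
qed

lemma sqi_sum: assumes "finite I" "\<And>i. i \<in> I \<Longrightarrow> sqi M (f i)" shows "sqi M (\<lambda>x. \<Sum>i\<in>I. f i x)"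
  using assms
proof (induction I rule: finite_induct)
  case empty then show ?case by (simp add: sqi_zero)
next
  case (insert a F)
  then have "sqi M (\<lambda>x. f a x + (\<Sum>i\<in>F. f i x))" by (intro sqi_add) auto
  then show ?case using insert by simp
qed

lemma sqi_bound: assumes "sqi M f" "g \<in> borel_measurable M" "\<And>x. x \<in> space M \<Longrightarrow> \<bar>g x\<bar> \<le> \<bar>f x\<bar>"
  shows "sqi M g"
proof -
  have "integrable M (\<lambda>x. (g x)\<^sup>2)"
  proof (rule Bochner_Integration.integrable_bound)
    show "integrable M (\<lambda>x. (f x)\<^sup>2)" using assms(1) by (simp add: sqi_def)
    show "(\<lambda>x. (g x)\<^sup>2) \<in> borel_measurable M" using assms(2) by measurable
    show "AE x in M. norm ((g x)\<^sup>2) \<le> norm ((f x)\<^sup>2)"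
      using assms(3) by (auto intro!: AE_I2 simp: abs_le_square_iff)
  qed
  then show ?thesis using assms by (simp add: sqi_def)
qed

lemma sqi_integrable: "finite_measure M \<Longrightarrow> sqi M f \<Longrightarrow> integrable M f"
  unfolding sqi_def by (auto intro: finite_measure.square_integrable_imp_integrable)

lemma spins_finite: "finite (spins n)"
  unfolding spins_def by (rule finite_PiE) auto

lemma spins_ne: "spins n \<noteq> {}"
  unfolding spins_def by (simp add: PiE_eq_empty_iff)

lemma spins_val: "\<sigma> \<in> spins n \<Longrightarrow> i \<in> {1..n} \<Longrightarrow> \<sigma> i = -1 \<or> \<sigma> i = 1"
  unfolding spins_def by auto

lemma spins_abs: "\<sigma> \<in> spins n \<Longrightarrow> i \<in> {1..n} \<Longrightarrow> \<bar>\<sigma> i\<bar> = 1"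
  using spins_val by fastforce

lemma wavg_gibbs: "wavg (spins n) (\<lambda>\<sigma>. exp (- hamiltonian n J tau h h1 \<sigma>))"
  by unfold_locales (auto simp: spins_finite spins_ne)

lemma gibbs_avg: "gibbs n J tau h h1 f = avg (spins n) (\<lambda>\<sigma>. exp (- hamiltonian n J tau h h1 \<sigma>)) f"
  unfolding gibbs_def avg_def partition_fn_def by (simp add: mult.commute)

lemma H_bound:
  assumes "\<sigma> \<in> spins n"
  shows "\<bar>hamiltonian n J tau h h1 \<sigma>\<bar> \<le>
    (\<Sum>X\<in>Pow {1..n}. \<bar>J X\<bar>) + real n * \<bar>h\<bar> + \<bar>h1\<bar> * (\<Sum>i\<in>{1..n}. real (tau i))"
proof -
  have p: "\<bar>\<Prod>i\<in>X. \<sigma> i\<bar> = 1" if "X \<in> Pow {1..n}" for X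
    using that assms by (auto simp: abs_prod spins_abs intro!: prod.neutral)
  have a: "\<bar>\<Sum>X\<in>Pow {1..n}. J X * (\<Prod>i\<in>X. \<sigma> i)\<bar> \<le> (\<Sum>X\<in>Pow {1..n}. \<bar>J X\<bar>)"
    by (rule order_trans[OF sum_abs]) (simp add: abs_mult p)
  have b: "\<bar>\<Sum>i\<in>{1..n}. \<sigma> i\<bar> \<le> real n"
    by (rule order_trans[OF sum_abs]) (simp add: spins_abs[OF assms])
  have c: "\<bar>\<Sum>i\<in>{1..n}. real (tau i) * \<sigma> i\<bar> \<le> (\<Sum>i\<in>{1..n}. real (tau i))"
    by (rule order_trans[OF sum_abs]) (simp add: abs_mult spins_abs[OF assms])
  have b': "\<bar>h * (\<Sum>i\<in>{1..n}. \<sigma> i)\<bar> \<le> real n * \<bar>h\<bar>"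
    using b by (simp add: abs_mult mult.commute mult_left_mono)
  have c': "\<bar>h1 * (\<Sum>i\<in>{1..n}. real (tau i) * \<sigma> i)\<bar> \<le> \<bar>h1\<bar> * (\<Sum>i\<in>{1..n}. real (tau i))"
    using c by (simp add: abs_mult mult_left_mono)
  show ?thesis unfolding hamiltonian_def using a b' c' by linarith
qed

lemma pressure_bound:
  fixes R :: real
  assumes "\<And>\<sigma>. \<sigma> \<in> spins n \<Longrightarrow> \<bar>hamiltonian n J tau h h1 \<sigma>\<bar> \<le> R"
  shows "\<bar>pressure n J tau h h1\<bar> \<le> R + ln (real (card (spins n)))"
proof -
  let ?Z = "partition_fn n J tau h h1"
  obtain \<sigma>0 where s0: "\<sigma>0 \<in> spins n" using spins_ne by blast
  have R0: "0 \<le> R" using assms[OF s0] by linarith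
  have t: "exp (- R) \<le> exp (- hamiltonian n J tau h h1 \<sigma>)" "exp (- hamiltonian n J tau h h1 \<sigma>) \<le> exp R"
    if "\<sigma> \<in> spins n" for \<sigma> using assms[OF that] by auto
  have "exp (- hamiltonian n J tau h h1 \<sigma>0) \<le> ?Z"
    unfolding partition_fn_def by (rule member_le_sum) (auto simp: s0 spins_finite)
  then have lo: "exp (- R) \<le> ?Z" using t(1)[OF s0] by linarith
  have up: "?Z \<le> real (card (spins n)) * exp R"
    unfolding partition_fn_def using sum_bounded_above[of "spins n" "\<lambda>\<sigma>. exp (- hamiltonian n J tau h h1 \<sigma>)" "exp R"] t(2)
    by simp
  have c1: "1 \<le> real (card (spins n))" using spins_finite spins_ne
    by (simp add: Suc_leI card_gt_0_iff)
  have Zp: "0 < ?Z" using lo by (meson exp_gt_zero less_le_trans)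
  have "- R \<le> ln ?Z" using lo Zp by (subst ln_ge_iff) auto
  moreover have "ln ?Z \<le> ln (real (card (spins n))) + R"
  proof -
    have "ln ?Z \<le> ln (real (card (spins n)) * exp R)" using up Zp by simp
    also have "\<dots> = ln (real (card (spins n))) + R" using c1 by (simp add: ln_mult)
    finally show ?thesis .
  qed
  moreover have "0 \<le> ln (real (card (spins n)))" using c1 by simp
  ultimately have "\<bar>ln ?Z\<bar> \<le> R + ln (real (card (spins n)))" by linarith
  moreover have "\<bar>pressure n J tau h h1\<bar> \<le> \<bar>ln ?Z\<bar>"
  proof (cases "n = 0")
    case False
    then have "1 \<le> real n" by simp
    then have "\<bar>ln ?Z / real n\<bar> \<le> \<bar>ln ?Z\<bar>"
      by (simp add: abs_divide divide_le_eq mult_le_cancel_left1 mult_le_cancel_left2)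
    then show ?thesis by (simp add: pressure_def)
  qed (simp add: pressure_def)
  ultimately show ?thesis by linarith
qed



context
  fixes \<mu> :: "nat \<Rightarrow> nat set \<Rightarrow> real measure" and \<theta> \<alpha> :: real and n :: nat
  assumes mu_prob: "\<And>X. prob_space (\<mu> n X)" and mu_sets: "\<And>X. sets (\<mu> n X) = sets borel"
    and alpha0: "0 \<le> \<alpha>" and mu_L2: "\<And>X. integrable (\<mu> n X) (\<lambda>x. x\<^sup>2)"
begin

lemma meas_H[measurable]: "(\<lambda>d. hamiltonian n (fst d) (snd d) h h1 \<sigma>) \<in> borel_measurable (disorder \<mu> \<theta> n \<alpha>)"
  unfolding hamiltonian_def
  by (intro borel_measurable_diff borel_measurable_uminus borel_measurable_sum borel_measurable_times
      borel_measurable_const meas_J[where \<mu>=\<mu> and n=n and \<alpha>=\<alpha> and \<theta>=\<theta>, OF mu_prob mu_sets alpha0] meas_tau[where \<mu>=\<mu> and n=n and \<alpha>=\<alpha> and \<theta>=\<theta>, OF mu_prob mu_sets alpha0]) auto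

lemma meas_gibbs[measurable]: "(\<lambda>d. gibbs n (fst d) (snd d) h h1 f) \<in> borel_measurable (disorder \<mu> \<theta> n \<alpha>)"
  unfolding gibbs_def partition_fn_def by measurable

lemma meas_P[measurable]: "(\<lambda>d. pressure n (fst d) (snd d) h h1) \<in> borel_measurable (disorder \<mu> \<theta> n \<alpha>)"
  unfolding pressure_def partition_fn_def by measurable

lemma int_bounded:
  fixes f :: "_ \<Rightarrow> real" and B :: real
  assumes "f \<in> borel_measurable (disorder \<mu> \<theta> n \<alpha>)" "\<And>d. \<bar>f d\<bar> \<le> B"
  shows "integrable (disorder \<mu> \<theta> n \<alpha>) f"
proof -
  interpret prob_space "disorder \<mu> \<theta> n \<alpha>" by (rule DM_prob[where \<mu>=\<mu> and n=n and \<alpha>=\<alpha> and \<theta>=\<theta>, OF mu_prob mu_sets alpha0])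
  show ?thesis by (rule integrable_const_bound[where B=B]) (use assms in auto)
qed

lemma sqi_P: "sqi (disorder \<mu> \<theta> n \<alpha>) (\<lambda>d. pressure n (fst d) (snd d) h h1)"
proof -
  let ?M = "disorder \<mu> \<theta> n \<alpha>"
  interpret prob_space ?M by (rule DM_prob[where \<mu>=\<mu> and n=n and \<alpha>=\<alpha> and \<theta>=\<theta>, OF mu_prob mu_sets alpha0])
  let ?R = "\<lambda>d. (\<Sum>X\<in>Pow {1..n}. \<bar>fst d X\<bar>) + real n * \<bar>h\<bar> + \<bar>h1\<bar> * (\<Sum>i\<in>{1..n}. real (snd d i))
     + ln (real (card (spins n)))"
  have sJ: "sqi ?M (\<lambda>d. fst d X)" if "X \<in> Pow {1..n}" for X
    unfolding sqi_def using meas_J[where \<mu>=\<mu> and n=n and \<alpha>=\<alpha> and \<theta>=\<theta>, OF mu_prob mu_sets alpha0 that] int_J2[where \<mu>=\<mu> and n=n and \<alpha>=\<alpha> and \<theta>=\<theta>, OF mu_prob mu_sets alpha0 that mu_L2] by simp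
  have sT: "sqi ?M (\<lambda>d. real (snd d i))" if "i \<in> {1..n}" for i
    unfolding sqi_def using meas_tau[where \<mu>=\<mu> and n=n and \<alpha>=\<alpha> and \<theta>=\<theta>, OF mu_prob mu_sets alpha0 that] int_tau2[where \<mu>=\<mu> and n=n and \<alpha>=\<alpha> and \<theta>=\<theta>, OF mu_prob mu_sets alpha0 that] by simp
  have fm: "finite_measure ?M" by unfold_locales
  have sR: "sqi ?M ?R"
    by (intro sqi_add sqi_sum sqi_abs sJ sqi_const[OF fm] sqi_cmult sT) auto
  show ?thesis
  proof (rule sqi_bound[OF sR meas_P])
    fix d
    have "\<bar>pressure n (fst d) (snd d) h h1\<bar> \<le> ?R d"
      by (rule pressure_bound) (rule H_bound)
    then show "\<bar>pressure n (fst d) (snd d) h h1\<bar> \<le> \<bar>?R d\<bar>" by linarith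
  qed
qed

lemma int_P: "integrable (disorder \<mu> \<theta> n \<alpha>) (\<lambda>d. pressure n (fst d) (snd d) h h1)"
proof -
  interpret prob_space "disorder \<mu> \<theta> n \<alpha>" by (rule DM_prob[where \<mu>=\<mu> and n=n and \<alpha>=\<alpha> and \<theta>=\<theta>, OF mu_prob mu_sets alpha0])
  show ?thesis by (rule sqi_integrable[OF _ sqi_P]) unfold_locales
qed

lemma int_Psq: "integrable (disorder \<mu> \<theta> n \<alpha>) (\<lambda>d. (pressure n (fst d) (snd d) h h1 - c)\<^sup>2)"
proof -
  interpret prob_space "disorder \<mu> \<theta> n \<alpha>" by (rule DM_prob[where \<mu>=\<mu> and n=n and \<alpha>=\<alpha> and \<theta>=\<theta>, OF mu_prob mu_sets alpha0])
  have fm: "finite_measure (disorder \<mu> \<theta> n \<alpha>)" by unfold_locales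
  have "sqi (disorder \<mu> \<theta> n \<alpha>) (\<lambda>d. pressure n (fst d) (snd d) h h1 + (- c))"
    by (intro sqi_add sqi_P sqi_const[OF fm])
  then show ?thesis by (simp add: sqi_def)
qed

end


lemma (in wavg) avg_sq_ge: "(avg A w g)\<^sup>2 \<le> avg A w (\<lambda>x. (g x)\<^sup>2)"
proof -
  define c where "c = avg A w g"
  have "avg A w (\<lambda>x. (g x - c)\<^sup>2) = avg A w (\<lambda>x. (g x)\<^sup>2 - (2 * c) * g x + c\<^sup>2)"
    by (rule avg_cong) (simp add: power2_eq_square algebra_simps)
  also have "\<dots> = avg A w (\<lambda>x. (g x)\<^sup>2) - 2 * c * c + c\<^sup>2"
    by (simp add: avg_add avg_diff avg_cmult avg_const c_def)
  finally have V: "avg A w (\<lambda>x. (g x - c)\<^sup>2) = avg A w (\<lambda>x. (g x)\<^sup>2) - c\<^sup>2" by (simp add: power2_eq_square)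
  have "0 \<le> avg A w (\<lambda>x. (g x - c)\<^sup>2)"
    using avg_mono[of "\<lambda>x. 0" "\<lambda>x. (g x - c)\<^sup>2"] by (simp add: avg_const)
  then show ?thesis using V c_def by simp
qed

lemma (in wavg) avg_sq_shift: "avg A w (\<lambda>x. (g x - m)\<^sup>2) = (avg A w (\<lambda>x. (g x)\<^sup>2) - (avg A w g)\<^sup>2) + (avg A w g - m)\<^sup>2"
proof -
  have "avg A w (\<lambda>x. (g x - m)\<^sup>2) = avg A w (\<lambda>x. (g x)\<^sup>2 - (2 * m) * g x + m\<^sup>2)"
    by (rule avg_cong) (simp add: power2_eq_square algebra_simps)
  also have "\<dots> = avg A w (\<lambda>x. (g x)\<^sup>2) - 2 * m * avg A w g + m\<^sup>2"
    by (simp add: avg_add avg_diff avg_cmult avg_const)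
  finally show ?thesis by (simp add: power2_eq_square algebra_simps)
qed

definition Ssum :: "nat \<Rightarrow> (nat \<Rightarrow> real) \<Rightarrow> real" where "Ssum n \<sigma> = (\<Sum>i\<in>{1..n}. \<sigma> i)"

lemma H_shift: "hamiltonian n J tau (h + t) h1 \<sigma> = hamiltonian n J tau h h1 \<sigma> - t * Ssum n \<sigma>"
  unfolding hamiltonian_def Ssum_def by (simp add: algebra_simps)

lemma overlap_Ssum: "overlap n \<sigma> = Ssum n \<sigma> / real n"
  unfolding overlap_def Ssum_def ..

lemma Ssum_bound: "\<sigma> \<in> spins n \<Longrightarrow> \<bar>Ssum n \<sigma>\<bar> \<le> real n"
  unfolding Ssum_def by (rule order_trans[OF sum_abs]) (simp add: spins_abs)

lemma overlap_bound: "\<sigma> \<in> spins n \<Longrightarrow> \<bar>overlap n \<sigma>\<bar> \<le> 1"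
  using Ssum_bound[of \<sigma> n] unfolding overlap_Ssum
  by (cases "n = 0") (auto simp: abs_divide divide_le_eq)

lemma gibbs_Q_bound: "\<bar>gibbs n J tau h h1 (overlap n)\<bar> \<le> 1"
proof -
  interpret wavg "spins n" "\<lambda>\<sigma>. exp (- hamiltonian n J tau h h1 \<sigma>)" by (rule wavg_gibbs)
  show ?thesis unfolding gibbs_avg by (rule avg_abs_le) (rule overlap_bound)
qed

lemma nP_shift:
  assumes "1 \<le> n"
  shows "real n * pressure n J tau (h + t) h1
    = ln (\<Sum>\<sigma>\<in>spins n. exp (- hamiltonian n J tau h h1 \<sigma>) * exp (t * Ssum n \<sigma>))"
proof -
  have "real n * pressure n J tau (h + t) h1 = ln (partition_fn n J tau (h + t) h1)"
    using assms by (simp add: pressure_def)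
  also have "partition_fn n J tau (h + t) h1 = (\<Sum>\<sigma>\<in>spins n. exp (- hamiltonian n J tau h h1 \<sigma>) * exp (t * Ssum n \<sigma>))"
    unfolding partition_fn_def H_shift by (simp add: exp_add[symmetric])
  finally show ?thesis .
qed

lemma nP_0:
  assumes "1 \<le> n"
  shows "real n * pressure n J tau h h1 = ln (\<Sum>\<sigma>\<in>spins n. exp (- hamiltonian n J tau h h1 \<sigma>))"
  using assms by (simp add: pressure_def partition_fn_def)

lemma tangent_P:
  assumes "1 \<le> n"
  shows "t * gibbs n J tau h h1 (overlap n) \<le> pressure n J tau (h + t) h1 - pressure n J tau h h1"
proof -
  interpret wavg "spins n" "\<lambda>\<sigma>. exp (- hamiltonian n J tau h h1 \<sigma>)" by (rule wavg_gibbs)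
  have n0: "0 < real n" using assms by simp
  have "avg (spins n) (\<lambda>\<sigma>. exp (- hamiltonian n J tau h h1 \<sigma>)) (\<lambda>\<sigma>. t * Ssum n \<sigma>)
     \<le> real n * pressure n J tau (h + t) h1 - real n * pressure n J tau h h1"
  proof -
    have "avg (spins n) (\<lambda>\<sigma>. exp (- hamiltonian n J tau h h1 \<sigma>)) (\<lambda>\<sigma>. t * Ssum n \<sigma>)
      \<le> ln (\<Sum>\<sigma>\<in>spins n. exp (- hamiltonian n J tau h h1 \<sigma>) * exp (t * Ssum n \<sigma>))
         - ln (\<Sum>\<sigma>\<in>spins n. exp (- hamiltonian n J tau h h1 \<sigma>))" by (rule tangent)
    also have "\<dots> = real n * pressure n J tau (h + t) h1 - real n * pressure n J tau h h1"
      by (simp only: nP_shift[OF assms, symmetric] nP_0[OF assms, symmetric])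
    finally show ?thesis .
  qed
  moreover have "avg (spins n) (\<lambda>\<sigma>. exp (- hamiltonian n J tau h h1 \<sigma>)) (\<lambda>\<sigma>. t * Ssum n \<sigma>)
      = real n * (t * gibbs n J tau h h1 (overlap n))"
  proof -
    have "avg (spins n) (\<lambda>\<sigma>. exp (- hamiltonian n J tau h h1 \<sigma>)) (\<lambda>\<sigma>. t * Ssum n \<sigma>)
        = avg (spins n) (\<lambda>\<sigma>. exp (- hamiltonian n J tau h h1 \<sigma>)) (\<lambda>\<sigma>. (real n * t) * overlap n \<sigma>)"
      by (rule avg_cong) (use n0 in \<open>simp add: overlap_Ssum\<close>)
    then show ?thesis by (simp add: avg_cmult gibbs_avg)
  qed
  ultimately have "real n * (t * gibbs n J tau h h1 (overlap n)) \<le> real n * (pressure n J tau (h + t) h1 - pressure n J tau h h1)"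
    by (simp add: algebra_simps)
  then show ?thesis using n0 by simp
qed

lemma P_lip:
  assumes "1 \<le> n" "0 \<le> t"
  shows "pressure n J tau (h + t) h1 - pressure n J tau h h1 \<le> t"
proof -
  have "(- t) * gibbs n J tau (h + t) h1 (overlap n) \<le> pressure n J tau (h + t + - t) h1 - pressure n J tau (h + t) h1"
    by (rule tangent_P[OF assms(1)])
  moreover have "t * gibbs n J tau (h + t) h1 (overlap n) \<le> t"
  proof -
    have "gibbs n J tau (h + t) h1 (overlap n) \<le> 1" using gibbs_Q_bound[of n J tau "h + t" h1] by (simp add: abs_le_iff)
    then have "t * gibbs n J tau (h + t) h1 (overlap n) \<le> t * 1" by (rule mult_left_mono) (rule assms(2))
    then show ?thesis by simp
  qed
  ultimately show ?thesis by simp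
qed

lemma P_lip_abs:
  assumes "1 \<le> n"
  shows "\<bar>pressure n J tau a h1 - pressure n J tau b h1\<bar> \<le> \<bar>a - b\<bar>"
proof (cases "a \<le> b")
  case True
  have "pressure n J tau (a + (b - a)) h1 - pressure n J tau a h1 \<le> b - a" by (rule P_lip) (use assms True in auto)
  moreover have "(b - a) * gibbs n J tau a h1 (overlap n) \<le> pressure n J tau (a + (b - a)) h1 - pressure n J tau a h1"
    by (rule tangent_P[OF assms])
  moreover have "- (b - a) \<le> (b - a) * gibbs n J tau a h1 (overlap n)"
  proof -
    have "-1 \<le> gibbs n J tau a h1 (overlap n)" using gibbs_Q_bound[of n J tau a h1] by (simp add: abs_le_iff)
    then have "(b - a) * (-1) \<le> (b - a) * gibbs n J tau a h1 (overlap n)" by (rule mult_left_mono) (use True in simp)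
    then show ?thesis by simp
  qed
  ultimately show ?thesis using True by simp
next
  case False
  have "pressure n J tau (b + (a - b)) h1 - pressure n J tau b h1 \<le> a - b" by (rule P_lip) (use assms False in auto)
  moreover have "(a - b) * gibbs n J tau b h1 (overlap n) \<le> pressure n J tau (b + (a - b)) h1 - pressure n J tau b h1"
    by (rule tangent_P[OF assms])
  moreover have "- (a - b) \<le> (a - b) * gibbs n J tau b h1 (overlap n)"
  proof -
    have "-1 \<le> gibbs n J tau b h1 (overlap n)" using gibbs_Q_bound[of n J tau b h1] by (simp add: abs_le_iff)
    then have "(a - b) * (-1) \<le> (a - b) * gibbs n J tau b h1 (overlap n)" by (rule mult_left_mono) (use False in simp)
    then show ?thesis by simp
  qed
  ultimately show ?thesis using False by simp
qed



lemma var_bound: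
  assumes n1: "1 \<le> n"
  shows "gibbs n J tau h h1 (\<lambda>\<sigma>. (overlap n \<sigma>)\<^sup>2) - (gibbs n J tau h h1 (overlap n))\<^sup>2
    \<le> 16 * real n * (pressure n J tau (h + 1 / (2 * real n)) h1 + pressure n J tau (h - 1 / (2 * real n)) h1
        - 2 * pressure n J tau h h1)"
proof -
  let ?w = "\<lambda>\<sigma>. exp (- hamiltonian n J tau h h1 \<sigma>)"
  interpret wavg "spins n" ?w by (rule wavg_gibbs)
  define t where "t = 1 / (2 * real n)"
  have n0: "0 < real n" using n1 by simp
  have t0: "0 < t" using n0 by (simp add: t_def)
  have nt: "real n * t = 1/2" using n0 by (simp add: t_def)
  define P where "P = (\<lambda>x. pressure n J tau x h1)"
  define V where "V = gibbs n J tau h h1 (\<lambda>\<sigma>. (overlap n \<sigma>)\<^sup>2) - (gibbs n J tau h h1 (overlap n))\<^sup>2"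
  define D where "D = real n * (P (h + t) + P (h - t) - 2 * P h)"
  have sd: "ln (1 + t\<^sup>2 * (avg (spins n) ?w (\<lambda>x. (Ssum n x)\<^sup>2) - (avg (spins n) ?w (Ssum n))\<^sup>2) / 2)
     \<le> ln (\<Sum>x\<in>spins n. ?w x * exp (t * Ssum n x)) + ln (\<Sum>x\<in>spins n. ?w x * exp (- t * Ssum n x))
        - 2 * ln (\<Sum>x\<in>spins n. ?w x)"
    by (rule second_diff)
  have e1: "ln (\<Sum>x\<in>spins n. ?w x * exp (t * Ssum n x)) = real n * P (h + t)"
    unfolding P_def by (rule nP_shift[OF n1, symmetric])
  have e2: "ln (\<Sum>x\<in>spins n. ?w x * exp (- t * Ssum n x)) = real n * P (h - t)"
    unfolding P_def using nP_shift[OF n1, of J tau h "- t" h1] by simp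
  have e3: "ln (\<Sum>x\<in>spins n. ?w x) = real n * P h"
    unfolding P_def by (rule nP_0[OF n1, symmetric])
  have a1: "avg (spins n) ?w (Ssum n) = real n * gibbs n J tau h h1 (overlap n)"
  proof -
    have "avg (spins n) ?w (Ssum n) = avg (spins n) ?w (\<lambda>x. real n * overlap n x)"
      by (rule avg_cong) (use n0 in \<open>simp add: overlap_Ssum\<close>)
    then show ?thesis by (simp add: avg_cmult gibbs_avg)
  qed
  have a2: "avg (spins n) ?w (\<lambda>x. (Ssum n x)\<^sup>2) = (real n)\<^sup>2 * gibbs n J tau h h1 (\<lambda>\<sigma>. (overlap n \<sigma>)\<^sup>2)"
  proof -
    have "avg (spins n) ?w (\<lambda>x. (Ssum n x)\<^sup>2) = avg (spins n) ?w (\<lambda>x. (real n)\<^sup>2 * (overlap n x)\<^sup>2)"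
      by (rule avg_cong) (use n0 in \<open>simp add: overlap_Ssum power_divide\<close>)
    then show ?thesis by (simp add: avg_cmult gibbs_avg)
  qed
  have tV: "t\<^sup>2 * (avg (spins n) ?w (\<lambda>x. (Ssum n x)\<^sup>2) - (avg (spins n) ?w (Ssum n))\<^sup>2) / 2 = V / 8"
  proof -
    have "t\<^sup>2 * (avg (spins n) ?w (\<lambda>x. (Ssum n x)\<^sup>2) - (avg (spins n) ?w (Ssum n))\<^sup>2) / 2
        = (real n * t)\<^sup>2 * V / 2"
      unfolding a1 a2 V_def by (simp add: power_mult_distrib algebra_simps)
    then show ?thesis using nt by (simp add: power2_eq_square)
  qed
  have V0: "0 \<le> V"
    using avg_sq_ge[of "overlap n"] unfolding V_def gibbs_avg by simp
  have lnD: "ln (1 + V / 8) \<le> D"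
    using sd unfolding e1 e2 e3 tV D_def by (simp add: algebra_simps)
  have expD: "1 + V / 8 \<le> exp D"
    using lnD V0 by (metis add_pos_nonneg divide_nonneg_pos exp_le_cancel_iff exp_ln zero_less_numeral zero_less_one)
  have D0: "0 \<le> D"
  proof -
    have "t * gibbs n J tau h h1 (overlap n) \<le> P (h + t) - P h"
      unfolding P_def by (rule tangent_P[OF n1])
    moreover have "(- t) * gibbs n J tau h h1 (overlap n) \<le> P (h + - t) - P h"
      unfolding P_def by (rule tangent_P[OF n1])
    ultimately have "0 \<le> P (h + t) + P (h - t) - 2 * P h" by simp
    then show ?thesis unfolding D_def using n0 by simp
  qed
  have D1: "D \<le> 1"
  proof -
    have "\<bar>P (h + t) - P h\<bar> \<le> \<bar>h + t - h\<bar>" unfolding P_def by (rule P_lip_abs[OF n1])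
    moreover have "\<bar>P (h - t) - P h\<bar> \<le> \<bar>h - t - h\<bar>" unfolding P_def by (rule P_lip_abs[OF n1])
    ultimately have "P (h + t) + P (h - t) - 2 * P h \<le> 2 * t" using t0 by simp
    then have "D \<le> real n * (2 * t)" unfolding D_def using n0 by (simp add: mult_left_mono)
    then show ?thesis using nt by simp
  qed
  have "exp D \<le> 1 + D + D\<^sup>2" by (rule exp_bound[OF D0 D1])
  moreover have "D\<^sup>2 \<le> D" using D0 D1 by (simp add: power2_eq_square mult_left_le)
  ultimately have "V / 8 \<le> 2 * D" using expD by linarith
  then have "V \<le> 16 * D" by simp
  then show ?thesis unfolding V_def D_def P_def t_def by (simp add: algebra_simps)
qed



lemma lip_cont: assumes "\<And>x y. \<bar>p x - p y\<bar> \<le> \<bar>x - y\<bar>" shows "continuous_on S (p :: real \<Rightarrow> real)"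
proof (rule lipschitz_on_continuous_on)
  show "1-lipschitz_on S p"
    by (rule lipschitz_onI) (use assms in \<open>auto simp: dist_real_def\<close>)
qed

lemma sdiff_integral:
  fixes p :: "real \<Rightarrow> real"
  assumes lip: "\<And>x y. \<bar>p x - p y\<bar> \<le> \<bar>x - y\<bar>" and ab: "a \<le> b" and e: "0 < \<eta>"
  shows "(\<lambda>h. p (h + \<eta>) + p (h - \<eta>) - 2 * p h) integrable_on {a..b}"
    and "integral {a..b} (\<lambda>h. p (h + \<eta>) + p (h - \<eta>) - 2 * p h) \<le> 2 * \<eta>\<^sup>2"
proof -
  have cont: "continuous_on S p" for S using lip_cont[OF lip] .
  have ip: "p integrable_on {u..v}" for u v by (rule integrable_continuous_interval[OF cont])
  have ip1: "(\<lambda>h. p (h + \<eta>)) integrable_on {u..v}" for u v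
    by (rule integrable_continuous_interval) (intro continuous_on_compose2[OF cont[of UNIV]] continuous_intros; auto)
  have ip2: "(\<lambda>h. p (h - \<eta>)) integrable_on {u..v}" for u v
    by (rule integrable_continuous_interval) (intro continuous_on_compose2[OF cont[of UNIV]] continuous_intros; auto)
  have ip3: "(\<lambda>h. 2 * p h) integrable_on {u..v}" for u v
    by (rule integrable_continuous_interval) (intro continuous_intros cont)
  show "(\<lambda>h. p (h + \<eta>) + p (h - \<eta>) - 2 * p h) integrable_on {a..b}"
    by (intro integrable_diff integrable_add ip1 ip2 ip3)
  define lo where "lo = a - \<eta>"
  define \<Phi> where "\<Phi> x = integral {lo..x} p" for x
  have I: "integral {u..v} p = \<Phi> v - \<Phi> u" if "lo \<le> u" "u \<le> v" for u v
    using Henstock_Kurzweil_Integration.integral_combine[OF that ip] unfolding \<Phi>_def by simp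
  have sh: "integral {u..v} (\<lambda>h. p (h + c)) = integral {u + c..v + c} p" for u v c
    using integral_shift_Icc_real[of u v p c] by (simp add: comp_def add.commute)
  have K: "\<bar>(\<Phi> (x + \<eta>) - \<Phi> x) - (\<Phi> x - \<Phi> (x - \<eta>))\<bar> \<le> \<eta>\<^sup>2" if "a \<le> x" for x
  proof -
    have "\<Phi> (x + \<eta>) - \<Phi> x = integral {x..x+\<eta>} p" using I[of x "x + \<eta>"] that e by (simp add: lo_def)
    also have "\<dots> = integral {x-\<eta>..x} (\<lambda>h. p (h + \<eta>))" using sh[of "x - \<eta>" x \<eta>] by simp
    finally have 1: "\<Phi> (x + \<eta>) - \<Phi> x = integral {x-\<eta>..x} (\<lambda>h. p (h + \<eta>))" .
    have 2: "\<Phi> x - \<Phi> (x - \<eta>) = integral {x-\<eta>..x} p" using I[of "x - \<eta>" x] that e by (simp add: lo_def)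
    have eq: "(\<Phi> (x + \<eta>) - \<Phi> x) - (\<Phi> x - \<Phi> (x - \<eta>)) = integral {x-\<eta>..x} (\<lambda>h. p (h + \<eta>) - p h)"
      unfolding 1 2 by (rule integral_diff[symmetric, OF ip1 ip])
    have L: "\<bar>p (h + \<eta>) - p h\<bar> \<le> \<eta>" for h using lip[of "h + \<eta>" h] e by simp
    have L1: "p (h + \<eta>) - p h \<le> \<eta>" and L2: "- \<eta> \<le> p (h + \<eta>) - p h" for h using L[of h] by (simp_all add: abs_le_iff)
    moreover have "integral {x-\<eta>..x} (\<lambda>h. p (h + \<eta>) - p h) \<le> integral {x-\<eta>..x} (\<lambda>h. \<eta>)"
      by (rule integral_le) (auto intro!: integrable_diff ip1 ip L1 L2)
    moreover have "integral {x-\<eta>..x} (\<lambda>h. - \<eta>) \<le> integral {x-\<eta>..x} (\<lambda>h. p (h + \<eta>) - p h)"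
      by (rule integral_le) (auto intro!: integrable_diff ip1 ip L1 L2)
    moreover have "integral {x-\<eta>..x} (\<lambda>h. \<eta>) = \<eta>\<^sup>2" using e by (simp add: power2_eq_square)
    moreover have "integral {x-\<eta>..x} (\<lambda>h. - \<eta>) = - \<eta>\<^sup>2" using e by (simp add: power2_eq_square)
    ultimately show ?thesis using eq by linarith
  qed
  have "integral {a..b} (\<lambda>h. p (h + \<eta>) + p (h - \<eta>) - 2 * p h)
      = integral {a..b} (\<lambda>h. p (h + \<eta>)) + integral {a..b} (\<lambda>h. p (h + (- \<eta>))) - 2 * integral {a..b} p"
    by (simp add: integral_diff integral_add ip1 ip2 ip3 integrable_add ip)
  also have "\<dots> = integral {a + \<eta>..b + \<eta>} p + integral {a - \<eta>..b - \<eta>} p - 2 * integral {a..b} p"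
    unfolding sh by simp
  also have "\<dots> = ((\<Phi> (b + \<eta>) - \<Phi> b) - (\<Phi> b - \<Phi> (b - \<eta>))) - ((\<Phi> (a + \<eta>) - \<Phi> a) - (\<Phi> a - \<Phi> (a - \<eta>)))"
    using I[of "a + \<eta>" "b + \<eta>"] I[of "a - \<eta>" "b - \<eta>"] I[of a b] ab e by (simp add: lo_def)
  also have "\<dots> \<le> \<eta>\<^sup>2 + \<eta>\<^sup>2" using K[of b] K[of a] ab by linarith
  finally show "integral {a..b} (\<lambda>h. p (h + \<eta>) + p (h - \<eta>) - 2 * p h) \<le> 2 * \<eta>\<^sup>2" by simp
qed



lemma sq_sandwich:
  fixes \<delta> x A B C D s :: real
  assumes d: "0 < \<delta>" and u: "\<delta> * x \<le> A - B + s" and l: "C - D - s \<le> \<delta> * x"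
  shows "x\<^sup>2 \<le> 3 * (A\<^sup>2 + B\<^sup>2 + s\<^sup>2) / \<delta>\<^sup>2 + 3 * (C\<^sup>2 + D\<^sup>2 + s\<^sup>2) / \<delta>\<^sup>2"
proof -
  have sq3: "(a + b + c)\<^sup>2 \<le> 3 * (a\<^sup>2 + b\<^sup>2 + c\<^sup>2)" for a b c :: real
  proof -
    have "0 \<le> (a - b)\<^sup>2 + (b - c)\<^sup>2 + (a - c)\<^sup>2" by simp
    then show ?thesis by (simp add: power2_eq_square algebra_simps)
  qed
  have "(\<delta> * x)\<^sup>2 \<le> (A - B + s)\<^sup>2 + (C - D - s)\<^sup>2"
  proof (cases "0 \<le> \<delta> * x")
    case True
    then have "(\<delta> * x)\<^sup>2 \<le> (A - B + s)\<^sup>2" using u by (intro power_mono) auto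
    then show ?thesis by (smt (verit) zero_le_power2)
  next
    case False
    then have "(- (\<delta> * x))\<^sup>2 \<le> (- (C - D - s))\<^sup>2" using l by (intro power_mono) auto
    then show ?thesis by (smt (verit) power2_minus zero_le_power2)
  qed
  also have "\<dots> \<le> 3 * (A\<^sup>2 + B\<^sup>2 + s\<^sup>2) + 3 * (C\<^sup>2 + D\<^sup>2 + s\<^sup>2)"
    using sq3[of A "-B" s] sq3[of C "-D" "-s"] by simp
  finally have "\<delta>\<^sup>2 * x\<^sup>2 \<le> 3 * (A\<^sup>2 + B\<^sup>2 + s\<^sup>2) + 3 * (C\<^sup>2 + D\<^sup>2 + s\<^sup>2)"
    by (simp add: power_mult_distrib)
  then have "(\<delta>\<^sup>2 * x\<^sup>2) / \<delta>\<^sup>2 \<le> (3 * (A\<^sup>2 + B\<^sup>2 + s\<^sup>2) + 3 * (C\<^sup>2 + D\<^sup>2 + s\<^sup>2)) / \<delta>\<^sup>2"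
    by (rule divide_right_mono) simp
  then show ?thesis using d by (simp add: add_divide_distrib)
qed

definition ppf :: "(nat \<Rightarrow> nat set \<Rightarrow> real measure) \<Rightarrow> real \<Rightarrow> real \<Rightarrow> nat \<Rightarrow> real \<Rightarrow> real \<Rightarrow> real" where
  "ppf \<mu> \<theta> \<alpha> n h1 x = (\<integral>d. pressure n (fst d) (snd d) x h1 \<partial>disorder \<mu> \<theta> n \<alpha>)"

definition sdf :: "(nat \<Rightarrow> nat set \<Rightarrow> real measure) \<Rightarrow> real \<Rightarrow> real \<Rightarrow> nat \<Rightarrow> real \<Rightarrow> real \<Rightarrow> real \<Rightarrow> real" where
  "sdf \<mu> \<theta> \<alpha> n h1 e h = ppf \<mu> \<theta> \<alpha> n h1 (h + e) + ppf \<mu> \<theta> \<alpha> n h1 (h - e) - 2 * ppf \<mu> \<theta> \<alpha> n h1 h"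

context
  fixes \<mu> :: "nat \<Rightarrow> nat set \<Rightarrow> real measure" and \<theta> \<alpha> :: real and n :: nat and h1 CP :: real
  assumes mu_prob: "\<And>X. prob_space (\<mu> n X)" and mu_sets: "\<And>X. sets (\<mu> n X) = sets borel"
    and alpha0: "0 \<le> \<alpha>" and mu_L2: "\<And>X. integrable (\<mu> n X) (\<lambda>x. x\<^sup>2)"
    and n1: "1 \<le> n"
    and conc_n: "\<forall>h0 \<in> {0..1}.
        (\<integral>d. (pressure n (fst d) (snd d) h0 h1
               - (\<integral>d'. pressure n (fst d') (snd d') h0 h1 \<partial>disorder \<mu> \<theta> n \<alpha>)) ^ 2
           \<partial>disorder \<mu> \<theta> n \<alpha>) \<le> CP / real n"
begin

abbreviation "DD \<equiv> disorder \<mu> \<theta> n \<alpha>"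

lemmas DMP = DM_prob[where \<mu>=\<mu> and n=n and \<alpha>=\<alpha> and \<theta>=\<theta>, OF mu_prob mu_sets alpha0]
lemmas mgibbs = meas_gibbs[where \<mu>=\<mu> and n=n and \<alpha>=\<alpha> and \<theta>=\<theta>, OF mu_prob mu_sets alpha0 mu_L2]
lemmas mP = meas_P[where \<mu>=\<mu> and n=n and \<alpha>=\<alpha> and \<theta>=\<theta>, OF mu_prob mu_sets alpha0 mu_L2]
lemmas iP = int_P[where \<mu>=\<mu> and n=n and \<alpha>=\<alpha> and \<theta>=\<theta>, OF mu_prob mu_sets alpha0 mu_L2]
lemmas iPsq = int_Psq[where \<mu>=\<mu> and n=n and \<alpha>=\<alpha> and \<theta>=\<theta>, OF mu_prob mu_sets alpha0 mu_L2]
lemmas ibd = int_bounded[where \<mu>=\<mu> and n=n and \<alpha>=\<alpha> and \<theta>=\<theta>, OF mu_prob mu_sets alpha0 mu_L2]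

abbreviation "pp \<equiv> ppf \<mu> \<theta> \<alpha> n h1"

abbreviation "sd \<equiv> sdf \<mu> \<theta> \<alpha> n h1"

lemma pp_def: "pp x = (\<integral>d. pressure n (fst d) (snd d) x h1 \<partial>DD)"
  by (simp add: ppf_def)

lemma sd_def: "sd e h = pp (h + e) + pp (h - e) - 2 * pp h"
  by (simp add: sdf_def)

lemma int_const_DD: "(\<integral>d. (c::real) \<partial>DD) = c"
proof -
  interpret prob_space DD by (rule DMP)
  show ?thesis by (simp add: prob_space)
qed

lemma meas1: "measure DD (space DD) = 1"
proof -
  interpret prob_space DD by (rule DMP)
  show ?thesis by (rule prob_space)
qed

lemma int_c: "integrable DD (\<lambda>d. (c::real))"
proof -
  interpret prob_space DD by (rule DMP)
  show ?thesis by simp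
qed

lemma int_G: "integrable DD (\<lambda>d. gibbs n (fst d) (snd d) h h1 (overlap n))"
  by (rule ibd[OF mgibbs, where B=1]) (rule gibbs_Q_bound)

lemma pp_lip1: "pp x - pp y \<le> \<bar>x - y\<bar>"
proof -
  have "pp x - pp y = (\<integral>d. pressure n (fst d) (snd d) x h1 - pressure n (fst d) (snd d) y h1 \<partial>DD)"
    unfolding pp_def by (rule Bochner_Integration.integral_diff[OF iP iP, symmetric])
  also have "\<dots> \<le> (\<integral>d. \<bar>x - y\<bar> \<partial>DD)"
    by (rule Bochner_Integration.integral_mono) (auto intro!: iP Bochner_Integration.integrable_diff int_c
        intro: order_trans[OF abs_ge_self P_lip_abs[OF n1]])
  finally show ?thesis by (simp add: meas1)
qed

lemma pp_lip: "\<bar>pp x - pp y\<bar> \<le> \<bar>x - y\<bar>"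
  using pp_lip1[of x y] pp_lip1[of y x] by (simp add: abs_minus_commute abs_le_iff)

lemma Fbound:
  assumes d0: "0 < \<delta>" and hd: "0 \<le> h - \<delta>" "h + \<delta> \<le> 1"
  shows "(let m = \<integral>d. gibbs n (fst d) (snd d) h h1 (overlap n) \<partial>DD in
            \<integral>d. gibbs n (fst d) (snd d) h h1 (\<lambda>\<sigma>. (overlap n \<sigma> - m)\<^sup>2) \<partial>DD)
       \<le> 16 * real n * sd (1 / (2 * real n)) h + 12 * CP / (real n * \<delta>\<^sup>2) + 12 * sd \<delta> h / \<delta>"
proof -
  define m where "m = (\<integral>d. gibbs n (fst d) (snd d) h h1 (overlap n) \<partial>DD)"
  define \<eta> where "\<eta> = 1 / (2 * real n)"
  define G where "G = (\<lambda>d. gibbs n (fst d) (snd d) h h1 (overlap n))"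
  define P where "P = (\<lambda>x d. pressure n (fst d) (snd d) x h1)"
  define s where "s = sd \<delta> h"
  have iPx: "integrable DD (P x)" for x unfolding P_def by (rule iP)
  have iGG: "integrable DD G" unfolding G_def by (rule int_G)
  have ppP: "pp x = integral\<^sup>L DD (P x)" for x unfolding pp_def P_def ..
  have tp: "\<delta> * G d \<le> P (h + \<delta>) d - P h d" for d
    unfolding G_def P_def by (rule tangent_P[OF n1])
  have tm: "(- \<delta>) * G d \<le> P (h - \<delta>) d - P h d" for d
  proof -
    have "(- \<delta>) * G d \<le> P (h + - \<delta>) d - P h d" unfolding G_def P_def by (rule tangent_P[OF n1])
    then show ?thesis by simp
  qed
  have m_up: "\<delta> * m \<le> pp (h + \<delta>) - pp h"
  proof -
    have "\<delta> * m = (\<integral>d. \<delta> * G d \<partial>DD)" unfolding m_def G_def by simp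
    also have "\<dots> \<le> (\<integral>d. P (h + \<delta>) d - P h d \<partial>DD)"
      by (rule Bochner_Integration.integral_mono) (auto intro!: Bochner_Integration.integrable_mult_right iGG Bochner_Integration.integrable_diff iPx tp)
    also have "\<dots> = pp (h + \<delta>) - pp h" unfolding ppP by (rule Bochner_Integration.integral_diff[OF iPx iPx])
    finally show ?thesis .
  qed
  have tm2: "- (\<delta> * G d) \<le> P (h - \<delta>) d - P h d" for d using tm[of d] by simp
  have m_lo: "(- \<delta>) * m \<le> pp (h - \<delta>) - pp h"
  proof -
    have "(- \<delta>) * m = (\<integral>d. (- \<delta>) * G d \<partial>DD)" unfolding m_def G_def by simp
    also have "\<dots> \<le> (\<integral>d. P (h - \<delta>) d - P h d \<partial>DD)"
      by (rule Bochner_Integration.integral_mono) (auto intro!: Bochner_Integration.integrable_mult_right iGG Bochner_Integration.integrable_diff iPx tm2)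
    also have "\<dots> = pp (h - \<delta>) - pp h" unfolding ppP by (rule Bochner_Integration.integral_diff[OF iPx iPx])
    finally show ?thesis .
  qed
  have s0: "0 \<le> s" using m_up m_lo unfolding s_def sd_def by simp
  have s2: "s \<le> 2 * \<delta>"
    using pp_lip[of "h + \<delta>" h] pp_lip[of "h - \<delta>" h] d0 unfolding s_def sd_def by (simp add: abs_le_iff)
  define e where "e = (\<lambda>x d. P x d - pp x)"
  define RHS where "RHS = (\<lambda>d. 16 * real n * (P (h + \<eta>) d + P (h - \<eta>) d - 2 * P h d)
      + 3 / \<delta>\<^sup>2 * ((e (h + \<delta>) d)\<^sup>2 + (e h d)\<^sup>2 + s\<^sup>2) + 3 / \<delta>\<^sup>2 * ((e h d)\<^sup>2 + (e (h - \<delta>) d)\<^sup>2 + s\<^sup>2))"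
  define LHS where "LHS = (\<lambda>d. gibbs n (fst d) (snd d) h h1 (\<lambda>\<sigma>. (overlap n \<sigma> - m)\<^sup>2))"
  have pw: "LHS d \<le> RHS d" for d
  proof -
    interpret wavg "spins n" "\<lambda>\<sigma>. exp (- hamiltonian n (fst d) (snd d) h h1 \<sigma>)" by (rule wavg_gibbs)
    have dec: "LHS d = (gibbs n (fst d) (snd d) h h1 (\<lambda>\<sigma>. (overlap n \<sigma>)\<^sup>2) - (G d)\<^sup>2) + (G d - m)\<^sup>2"
      unfolding LHS_def G_def gibbs_avg by (rule avg_sq_shift)
    have v: "gibbs n (fst d) (snd d) h h1 (\<lambda>\<sigma>. (overlap n \<sigma>)\<^sup>2) - (G d)\<^sup>2
        \<le> 16 * real n * (P (h + \<eta>) d + P (h - \<eta>) d - 2 * P h d)"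
      unfolding G_def P_def \<eta>_def by (rule var_bound[OF n1])
    have u: "\<delta> * (G d - m) \<le> e (h + \<delta>) d - e h d + s"
      using tp[of d] m_lo unfolding e_def s_def sd_def by (simp add: algebra_simps)
    have l: "e h d - e (h - \<delta>) d - s \<le> \<delta> * (G d - m)"
      using tm[of d] m_up unfolding e_def s_def sd_def by (simp add: algebra_simps)
    have x: "(G d - m)\<^sup>2 \<le> 3 * ((e (h + \<delta>) d)\<^sup>2 + (e h d)\<^sup>2 + s\<^sup>2) / \<delta>\<^sup>2
        + 3 * ((e h d)\<^sup>2 + (e (h - \<delta>) d)\<^sup>2 + s\<^sup>2) / \<delta>\<^sup>2"
      by (rule sq_sandwich[OF d0 u l])
    show ?thesis unfolding dec RHS_def using v x by simp
  qed
  have iLHS: "integrable DD LHS"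
  proof -
    have b: "\<bar>LHS d\<bar> \<le> (1 + \<bar>m\<bar>)\<^sup>2" for d
    proof -
      interpret wavg "spins n" "\<lambda>\<sigma>. exp (- hamiltonian n (fst d) (snd d) h h1 \<sigma>)" by (rule wavg_gibbs)
      show ?thesis unfolding LHS_def gibbs_avg
      proof (rule avg_abs_le)
        fix \<sigma> assume "\<sigma> \<in> spins n"
        then have "\<bar>overlap n \<sigma>\<bar> \<le> 1" by (rule overlap_bound)
        then have "\<bar>overlap n \<sigma> - m\<bar> \<le> 1 + \<bar>m\<bar>" by linarith
        then have "\<bar>overlap n \<sigma> - m\<bar>\<^sup>2 \<le> (1 + \<bar>m\<bar>)\<^sup>2" by (intro power_mono) auto
        then show "\<bar>(overlap n \<sigma> - m)\<^sup>2\<bar> \<le> (1 + \<bar>m\<bar>)\<^sup>2" by simp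
      qed
    qed
    show ?thesis unfolding LHS_def by (rule ibd[OF mgibbs]) (use b in \<open>simp add: LHS_def\<close>)
  qed
  have ie: "integrable DD (\<lambda>d. (e x d)\<^sup>2)" for x unfolding e_def P_def by (rule iPsq)
  have iRHS: "integrable DD RHS" unfolding RHS_def
    by (intro Bochner_Integration.integrable_add Bochner_Integration.integrable_mult_right Bochner_Integration.integrable_diff iPx ie int_c)
  have "integral\<^sup>L DD LHS \<le> integral\<^sup>L DD RHS"
    by (rule Bochner_Integration.integral_mono[OF iLHS iRHS pw])
  also have "integral\<^sup>L DD RHS = 16 * real n * sd \<eta> h
      + 3 / \<delta>\<^sup>2 * ((\<integral>d. (e (h + \<delta>) d)\<^sup>2 \<partial>DD) + (\<integral>d. (e h d)\<^sup>2 \<partial>DD) + s\<^sup>2)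
      + 3 / \<delta>\<^sup>2 * ((\<integral>d. (e h d)\<^sup>2 \<partial>DD) + (\<integral>d. (e (h - \<delta>) d)\<^sup>2 \<partial>DD) + s\<^sup>2)"
    unfolding RHS_def sd_def ppP
    by (simp add: iPx ie int_c Bochner_Integration.integrable_add Bochner_Integration.integrable_diff Bochner_Integration.integrable_mult_right meas1)
  finally have main: "integral\<^sup>L DD LHS \<le> 16 * real n * sd \<eta> h
      + 3 / \<delta>\<^sup>2 * ((\<integral>d. (e (h + \<delta>) d)\<^sup>2 \<partial>DD) + (\<integral>d. (e h d)\<^sup>2 \<partial>DD) + s\<^sup>2)
      + 3 / \<delta>\<^sup>2 * ((\<integral>d. (e h d)\<^sup>2 \<partial>DD) + (\<integral>d. (e (h - \<delta>) d)\<^sup>2 \<partial>DD) + s\<^sup>2)" .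
  have E: "(\<integral>d. (e x d)\<^sup>2 \<partial>DD) \<le> CP / real n" if "x \<in> {0..1}" for x
    using conc_n that unfolding e_def P_def pp_def by simp
  have hin: "h + \<delta> \<in> {0..1}" "h \<in> {0..1}" "h - \<delta> \<in> {0..1}" using hd d0 by auto
  define c where "c = CP / real n"
  have k: "0 \<le> 3 / \<delta>\<^sup>2" by simp
  have "3 / \<delta>\<^sup>2 * ((\<integral>d. (e (h + \<delta>) d)\<^sup>2 \<partial>DD) + (\<integral>d. (e h d)\<^sup>2 \<partial>DD) + s\<^sup>2) \<le> 3 / \<delta>\<^sup>2 * (2 * c + s\<^sup>2)"
    using E[OF hin(1)] E[OF hin(2)] by (intro mult_left_mono[OF _ k]) (simp add: c_def)
  moreover have "3 / \<delta>\<^sup>2 * ((\<integral>d. (e h d)\<^sup>2 \<partial>DD) + (\<integral>d. (e (h - \<delta>) d)\<^sup>2 \<partial>DD) + s\<^sup>2) \<le> 3 / \<delta>\<^sup>2 * (2 * c + s\<^sup>2)"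
    using E[OF hin(2)] E[OF hin(3)] by (intro mult_left_mono[OF _ k]) (simp add: c_def)
  ultimately have main2: "integral\<^sup>L DD LHS \<le> 16 * real n * sd \<eta> h + 2 * (3 / \<delta>\<^sup>2 * (2 * c + s\<^sup>2))"
    using main by linarith
  have "2 * (3 / \<delta>\<^sup>2 * (2 * c + s\<^sup>2)) = 12 * c / \<delta>\<^sup>2 + 6 * s\<^sup>2 / \<delta>\<^sup>2"
    using d0 by (simp add: field_simps)
  moreover have "6 * s\<^sup>2 / \<delta>\<^sup>2 \<le> 12 * s / \<delta>"
  proof -
    have "s\<^sup>2 \<le> 2 * \<delta> * s" using s0 s2 by (simp add: power2_eq_square mult_right_mono)
    then have "6 * s\<^sup>2 / \<delta>\<^sup>2 \<le> 6 * (2 * \<delta> * s) / \<delta>\<^sup>2" by (intro divide_right_mono) auto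
    also have "\<dots> = 12 * s / \<delta>" using d0 by (simp add: power2_eq_square field_simps)
    finally show ?thesis .
  qed
  moreover have "12 * c / \<delta>\<^sup>2 = 12 * CP / (real n * \<delta>\<^sup>2)" using d0 n1 by (simp add: c_def field_simps)
  ultimately have "integral\<^sup>L DD LHS \<le> 16 * real n * sd \<eta> h + 12 * CP / (real n * \<delta>\<^sup>2) + 12 * s / \<delta>"
    using main2 by linarith
  then show ?thesis unfolding Let_def LHS_def m_def \<eta>_def s_def by simp
qed

end


theorem theorem2p2:
  fixes \<theta> hl hh h1 \<alpha> C CP :: real
    and \<mu> :: "nat \<Rightarrow> nat set \<Rightarrow> real measure"
  assumes theta: "1/2 < \<theta>" "\<theta> \<le> 7/8"
    and hint: "0 < hl" "hl \<le> hh" "hh < 1"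
    and h1: "0 \<le> h1" "h1 \<le> 1"
    and alpha: "0 \<le> \<alpha>" "\<alpha> \<le> 1"
    and corr: "\<And>n J tau h0 i j. (\<forall>X\<in>Pow {1..n}. 0 \<le> J X) \<Longrightarrow> h0 \<in> {hl..hh} \<Longrightarrow>
        i \<in> {1..n} \<Longrightarrow> j \<in> {1..n} \<Longrightarrow>
        gibbs n J tau h0 h1 (\<lambda>\<sigma>. \<sigma> i * \<sigma> j)
          - gibbs n J tau h0 h1 (\<lambda>\<sigma>. \<sigma> i) * gibbs n J tau h0 h1 (\<lambda>\<sigma>. \<sigma> j) \<ge> 0"
    and mu_prob: "\<And>n X. prob_space (\<mu> n X)"
    and mu_sets: "\<And>n X. sets (\<mu> n X) = sets borel"
    and mu_nonneg: "\<And>n X. AE x in \<mu> n X. 0 \<le> x"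
    and mu_L2: "\<And>n X. integrable (\<mu> n X) (\<lambda>x. x ^ 2)"
    and var_bound: "\<And>n. (\<Sum>X\<in>Pow {1..n}. prob_space.variance (\<mu> n X) (\<lambda>x. x)) \<le> C * real n"
    and CP_pos: "0 < CP"
    and conc: "\<And>n h0 h1' \<alpha>'. 1 \<le> n \<Longrightarrow> h0 \<in> {0..1} \<Longrightarrow> h1' \<in> {0..1} \<Longrightarrow> \<alpha>' \<in> {0..1} \<Longrightarrow>
        (\<integral>d. (pressure n (fst d) (snd d) h0 h1'
               - (\<integral>d'. pressure n (fst d') (snd d') h0 h1' \<partial>disorder \<mu> \<theta> n \<alpha>')) ^ 2
           \<partial>disorder \<mu> \<theta> n \<alpha>') \<le> CP / real n"
  shows "\<exists>N. \<forall>n\<ge>N.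
    integral {hl..hh} (\<lambda>h0.
      let m = (\<integral>d. gibbs n (fst d) (snd d) h0 h1 (overlap n) \<partial>disorder \<mu> \<theta> n \<alpha>) in
      (\<integral>d. gibbs n (fst d) (snd d) h0 h1 (\<lambda>\<sigma>. (overlap n \<sigma> - m) ^ 2) \<partial>disorder \<mu> \<theta> n \<alpha>))
    \<le> (5 * CP + 42) / real n powr (1/3)"
proof -
  define T0 where "T0 = max 2 (max (8 / (5 * hl)) (8 / (5 * (1 - hh))))"
  have T02: "2 \<le> T0" and T0hl: "8 / (5 * hl) \<le> T0" and T0hh: "8 / (5 * (1 - hh)) \<le> T0"
    unfolding T0_def by auto
  define N where "N = nat \<lceil>T0 ^ 3\<rceil>"
  show ?thesis
  proof (intro exI allI impI)
    fix n assume nN: "N \<le> n"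
    have nT: "T0 ^ 3 \<le> real n"
    proof -
      have "real (nat \<lceil>T0 ^ 3\<rceil>) \<le> real n" using nN unfolding N_def by (simp only: of_nat_le_iff)
      then show ?thesis using real_nat_ceiling_ge[of "T0 ^ 3"] by linarith
    qed
    have "(2::real) ^ 3 \<le> T0 ^ 3" using T02 by (intro power_mono) auto
    then have n8: "8 \<le> real n" using nT by simp
    then have n0: "0 < real n" and n1: "1 \<le> n" by auto
    define t where "t = real n powr (1/3)"
    have t0: "0 < t" using n0 by (simp add: t_def)
    have t3: "t ^ 3 = real n"
    proof -
      have "t ^ 3 = real n powr ((1/3) * real 3)" unfolding t_def using n0 by (simp add: powr_power)
      also have "\<dots> = real n" using n0 by simp
      finally show ?thesis .
    qed
    have tT: "T0 \<le> t"
    proof (rule ccontr)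
      assume "\<not> T0 \<le> t"
      then have "t ^ 3 < T0 ^ 3" using t0 by (intro power_strict_mono) auto
      then show False using t3 nT by simp
    qed
    have t2: "2 \<le> t" using tT T02 by simp
    define \<delta> where "\<delta> = 8 / (5 * t)"
    have d0: "0 < \<delta>" using t0 by (simp add: \<delta>_def)
    have dhl: "\<delta> \<le> hl"
    proof -
      have "8 / (5 * hl) \<le> t" using T0hl tT by simp
      then have "8 \<le> t * (5 * hl)" using hint(1) by (simp add: divide_le_eq)
      then show ?thesis unfolding \<delta>_def using t0 by (simp add: divide_le_eq algebra_simps)
    qed
    have dhh: "\<delta> \<le> 1 - hh"
    proof -
      have "8 / (5 * (1 - hh)) \<le> t" using T0hh tT by simp
      then have "8 \<le> t * (5 * (1 - hh))" using hint(3) by (simp add: divide_le_eq)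
      then have "8 / (5 * t) \<le> (t * (5 * (1 - hh))) / (5 * t)" using t0 by (intro divide_right_mono) auto
      also have "(t * (5 * (1 - hh))) / (5 * t) = 1 - hh" using t0 by simp
      finally show ?thesis unfolding \<delta>_def .
    qed
    define \<eta> where "\<eta> = 1 / (2 * real n)"
    have e0: "0 < \<eta>" using n0 by (simp add: \<eta>_def)
    define p where "p = (\<lambda>x. \<integral>d. pressure n (fst d) (snd d) x h1 \<partial>disorder \<mu> \<theta> n \<alpha>)"
    have conc_n: "\<And>h0. h0 \<in> {0..1} \<Longrightarrow>
        (\<integral>d. (pressure n (fst d) (snd d) h0 h1
               - (\<integral>d'. pressure n (fst d') (snd d') h0 h1 \<partial>disorder \<mu> \<theta> n \<alpha>)) ^ 2
           \<partial>disorder \<mu> \<theta> n \<alpha>) \<le> CP / real n"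
      using conc[OF n1] h1 alpha by auto
    have conc_n': "\<forall>h0 \<in> {0..1}.
        (\<integral>d. (pressure n (fst d) (snd d) h0 h1
               - (\<integral>d'. pressure n (fst d') (snd d') h0 h1 \<partial>disorder \<mu> \<theta> n \<alpha>)) ^ 2
           \<partial>disorder \<mu> \<theta> n \<alpha>) \<le> CP / real n" using conc_n by blast
    note FB = Fbound[where \<mu>=\<mu> and n=n and \<alpha>=\<alpha> and \<theta>=\<theta>, OF mu_prob mu_sets alpha(1) mu_L2 n1 conc_n',
        unfolded sdf_def ppf_def]
    note PL = pp_lip[where \<mu>=\<mu> and n=n and \<alpha>=\<alpha> and \<theta>=\<theta>, OF mu_prob mu_sets alpha(1) mu_L2 n1 conc_n',
        unfolded ppf_def]
    have plip: "\<bar>p x - p y\<bar> \<le> \<bar>x - y\<bar>" for x y unfolding p_def by (rule PL)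
    define F where "F = (\<lambda>h0. let m = (\<integral>d. gibbs n (fst d) (snd d) h0 h1 (overlap n) \<partial>disorder \<mu> \<theta> n \<alpha>) in
      (\<integral>d. gibbs n (fst d) (snd d) h0 h1 (\<lambda>\<sigma>. (overlap n \<sigma> - m) ^ 2) \<partial>disorder \<mu> \<theta> n \<alpha>))"
    define s1 where "s1 = (\<lambda>h. p (h + \<eta>) + p (h - \<eta>) - 2 * p h)"
    define s2 where "s2 = (\<lambda>h. p (h + \<delta>) + p (h - \<delta>) - 2 * p h)"
    define K where "K = 12 * CP / (real n * \<delta>\<^sup>2)"
    define G2 where "G2 = (\<lambda>h. (16 * real n) * s1 h + K + (12 / \<delta>) * s2 h)"
    have FG: "F h \<le> G2 h" if "h \<in> {hl..hh}" for h
    proof -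
      have hd2: "0 \<le> h - \<delta>" "h + \<delta> \<le> 1" using that dhl dhh by auto
      have "F h \<le> 16 * real n * s1 h + K + 12 * s2 h / \<delta>"
        using FB[OF d0 hd2] unfolding F_def s1_def s2_def K_def p_def \<eta>_def by simp
      moreover have "12 * s2 h / \<delta> = (12 / \<delta>) * s2 h" by simp
      ultimately show ?thesis unfolding G2_def by linarith
    qed
    have hlh: "hl \<le> hh" by (rule hint(2))
    have is1: "s1 integrable_on {hl..hh}" and Is1: "integral {hl..hh} s1 \<le> 2 * \<eta>\<^sup>2"
      unfolding s1_def using sdiff_integral[OF plip hlh e0] by auto
    have is2: "s2 integrable_on {hl..hh}" and Is2: "integral {hl..hh} s2 \<le> 2 * \<delta>\<^sup>2"
      unfolding s2_def using sdiff_integral[OF plip hlh d0] by auto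
    have i1: "(\<lambda>h. (16 * real n) * s1 h) integrable_on {hl..hh}"
      using integrable_on_cmult_left[OF is1, of "16 * real n"] by simp
    have i2: "(\<lambda>h. (12 / \<delta>) * s2 h) integrable_on {hl..hh}"
      using integrable_on_cmult_left[OF is2, of "12 / \<delta>"] by simp
    have iK: "(\<lambda>h. K) integrable_on {hl..hh}" by (rule integrable_const_ivl)
    have iG2: "G2 integrable_on {hl..hh}" unfolding G2_def
      by (intro Henstock_Kurzweil_Integration.integrable_add i1 i2 iK)
    have IG2: "integral {hl..hh} G2 = (16 * real n) * integral {hl..hh} s1 + (hh - hl) * K + (12 / \<delta>) * integral {hl..hh} s2"
    proof -
      have "integral {hl..hh} G2 = integral {hl..hh} (\<lambda>h. (16 * real n) * s1 h + K) + integral {hl..hh} (\<lambda>h. (12 / \<delta>) * s2 h)"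
        unfolding G2_def by (rule Henstock_Kurzweil_Integration.integral_add[OF Henstock_Kurzweil_Integration.integrable_add[OF i1 iK] i2])
      also have "integral {hl..hh} (\<lambda>h. (16 * real n) * s1 h + K) = integral {hl..hh} (\<lambda>h. (16 * real n) * s1 h) + integral {hl..hh} (\<lambda>h. K)"
        by (rule Henstock_Kurzweil_Integration.integral_add[OF i1 iK])
      finally show ?thesis using hlh by (simp add: integral_mult[OF is1, symmetric] integral_mult[OF is2, symmetric] content_real)
    qed
    have Kn: "0 \<le> K" unfolding K_def using CP_pos n0 by simp
    have hh1: "hh - hl \<le> 1" using hint by simp
    have "integral {hl..hh} G2 \<le> (16 * real n) * (2 * \<eta>\<^sup>2) + K + (12 / \<delta>) * (2 * \<delta>\<^sup>2)"
    proof -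
      have a: "(16 * real n) * integral {hl..hh} s1 \<le> (16 * real n) * (2 * \<eta>\<^sup>2)"
        using Is1 n0 by (intro mult_left_mono) auto
      have b: "(hh - hl) * K \<le> K" using hh1 Kn hlh by (simp add: mult_left_le_one_le)
      have c: "(12 / \<delta>) * integral {hl..hh} s2 \<le> (12 / \<delta>) * (2 * \<delta>\<^sup>2)"
        using Is2 d0 by (intro mult_left_mono) auto
      show ?thesis unfolding IG2 using a b c by linarith
    qed
    also have "(16 * real n) * (2 * \<eta>\<^sup>2) = 8 / real n" using n0 by (simp add: \<eta>_def power2_eq_square field_simps)
    also have "(12 / \<delta>) * (2 * \<delta>\<^sup>2) = 192 / (5 * t)" using d0 t0 by (simp add: \<delta>_def power2_eq_square field_simps)
    also have "K = 300 * CP / (64 * t)"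
    proof -
      have nd: "real n * \<delta>\<^sup>2 = 64 * t / 25"
        using t0 unfolding t3[symmetric] \<delta>_def by (simp add: power2_eq_square power3_eq_cube field_simps)
      show ?thesis unfolding K_def nd using t0 by (simp add: field_simps)
    qed
    also have "8 / real n \<le> 2 / t"
    proof -
      have "2 * 2 \<le> t * t" by (rule mult_mono) (use t2 in auto)
      then have "4 \<le> t * t" by simp
      then have "4 * t \<le> real n" unfolding t3[symmetric] using t0 by (simp add: power3_eq_cube mult_right_mono)
      then have "8 / real n \<le> 8 / (4 * t)" using t0 by (intro divide_left_mono) auto
      then show ?thesis by simp
    qed
    finally have IG: "integral {hl..hh} G2 \<le> 2 / t + 300 * CP / (64 * t) + 192 / (5 * t)" by simp
    have fin: "2 / t + 300 * CP / (64 * t) + 192 / (5 * t) \<le> (5 * CP + 42) / real n powr (1/3)"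
    proof -
      have "(5 * CP + 42) / t - (2 / t + 300 * CP / (64 * t) + 192 / (5 * t)) = (5 * CP / 16 + 8 / 5) / t"
        using t0 by (simp add: field_simps)
      moreover have "0 \<le> (5 * CP / 16 + 8 / 5) / t" using CP_pos t0 by simp
      ultimately show ?thesis unfolding t_def by linarith
    qed
    show "integral {hl..hh} F \<le> (5 * CP + 42) / real n powr (1/3)"
    proof (cases "F integrable_on {hl..hh}")
      case True
      have "integral {hl..hh} F \<le> integral {hl..hh} G2" by (rule integral_le[OF True iG2 FG])
      then show ?thesis using IG fin by linarith
    next
      case False
      then have "integral {hl..hh} F = 0" by (rule not_integrable_integral)
      moreover have "0 \<le> (5 * CP + 42) / real n powr (1/3)" using CP_pos by simp
      ultimately show ?thesis by simp
    qed
  qed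
qed



end
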